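(* Let $d\ge2$, $\nu>0$, $R\ge1$, and let $\Lambda\subseteq\mathbb{S}^{d-1}$ be a finite set of points on the unit sphere which is $R^{-1}$-separated, i.e. $|\mu-\mu'|\ge R^{-1}$ for distinct $\mu,\mu'\in\Lambda$. Let $a:\mathbb{R}^d\times\mathbb{R}^d\to\mathbb{C}$ be such that for every $x$ the map $\xi\mapsto a(x,\xi)$ is smooth and for every $N\in\mathbb{N}_0$ there is $C_N$ with $\sup_{|\alpha|\le N}\sup_{\xi\in\mathbb{R}^d}|\partial_\xi^\alpha a(x,\xi)|\le C_N\langle x\rangle^{\nu/2}$ for all $x\in\mathbb{R}^d$. Then for all $b:\Lambda\to\mathbb{C}$, $$\Big\|\sum_{\mu\in\Lambda}b(\mu)\,a(x,\mu)\,e^{2\pi i\mu\cdot x}\Big\|_{L^2_x(\{|x|<R\})}\lesssim R^{\frac{d+\nu}{2}}\|b\|_{\ell^2(\Lambda)},$$ with an implicit constant depending only on $d,\nu$ and finitely many of the constants $C_N$ (in particular independent of $R$, $\Lambda$ and $b$).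
   Context: Notation: $\langle x\rangle:=2+|x|$. *)

theory Defs
  imports "HOL-Analysis.Analysis"
begin

text \<open>Japanese bracket as in the paper's notation: langle x rangle = 2 + |x|.\<close>
definition jbr :: "'a::real_normed_vector \<Rightarrow> real" where
  "jbr x = 2 + norm x"

definition pderiv_coord :: "'n::finite \<Rightarrow> (real^'n \<Rightarrow> complex) \<Rightarrow> real^'n \<Rightarrow> complex" where
  "pderiv_coord i f = (\<lambda>\<xi>. frechet_derivative f (at \<xi>) (axis i 1))"

text \<open>Iterated partial derivative along a list of coordinate indices; a multi-index alpha with
  |alpha| = k corresponds to such a list of length k.\<close>
fun pderivs :: "'n::finite list \<Rightarrow> (real^'n \<Rightarrow> complex) \<Rightarrow> real^'n \<Rightarrow> complex" where
  "pderivs [] f = f"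
| "pderivs (i # is) f = pderiv_coord i (pderivs is f)"

definition smooth_fun :: "(real^'n::finite \<Rightarrow> complex) \<Rightarrow> bool" where
  "smooth_fun f \<longleftrightarrow> (\<forall>is \<xi>. pderivs is f differentiable (at \<xi>))"

end

theory Submission
  imports Defs
begin

definition upd :: "real^'n \<Rightarrow> 'n \<Rightarrow> real \<Rightarrow> real^'n" where
  "upd t j s = (\<chi> i. if i = j then s else t$i)"

lemma upd_nth[simp]: "upd t j s $ i = (if i = j then s else t$i)"
  by (simp add: upd_def)
lemma upd_same[simp]: "upd t j (t$j) = t" by (simp add: vec_eq_iff)
lemma upd_upd_same[simp]: "upd (upd t j s) j s' = upd t j s'" by (simp add: vec_eq_iff)
lemma upd_comm: "i \<noteq> j \<Longrightarrow> upd (upd t i s) j s' = upd (upd t j s') i s" by (simp add: vec_eq_iff)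

definition lower :: "('n \<Rightarrow> real set) \<Rightarrow> 'n \<Rightarrow> real \<Rightarrow> real set" where
  "lower T j s = {u \<in> T j. u < s}"

definition D1 :: "('n \<Rightarrow> real set) \<Rightarrow> 'n \<Rightarrow> (real^'n \<Rightarrow> 'b::ab_group_add) \<Rightarrow> real^'n \<Rightarrow> 'b" where
  "D1 T j g t = (if lower T j (t$j) = {} then g t else g t - g (upd t j (Max (lower T j (t$j)))))"

fun DL :: "('n \<Rightarrow> real set) \<Rightarrow> 'n list \<Rightarrow> (real^'n \<Rightarrow> 'b::ab_group_add) \<Rightarrow> real^'n \<Rightarrow> 'b" where
  "DL T [] g = g"
| "DL T (j # L) g = D1 T j (DL T L g)"

fun NS :: "('n \<Rightarrow> real set) \<Rightarrow> 'n list \<Rightarrow> (real^'n \<Rightarrow> 'b::comm_monoid_add) \<Rightarrow> real^'n \<Rightarrow> 'b" where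
  "NS T [] F x = F x"
| "NS T (j # L) F x = (\<Sum>s\<in>{u \<in> T j. u \<le> x$j}. NS T L F (upd x j s))"

definition wt :: "('n \<Rightarrow> real set) \<Rightarrow> 'n \<Rightarrow> real \<Rightarrow> real" where
  "wt T j s = (if lower T j s = {} then 1 else s - Max (lower T j s))"

lemma tele1:
  assumes fin: "finite (T j)" and x: "x$j \<in> T j"
  shows "(\<Sum>s\<in>{u \<in> T j. u \<le> x$j}. D1 T j g (upd x j s)) = g x"
  using x
proof (induction "card {u \<in> T j. u \<le> x$j}" arbitrary: x rule: less_induct)
  case less
  show ?case
  proof (cases "lower T j (x$j) = {}")
    case True
    then have "{u \<in> T j. u \<le> x$j} = {x$j}" using less.prems by (force simp: lower_def)
    then show ?thesis using True by (simp add: D1_def)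
  next
    case False
    define p where "p = Max (lower T j (x$j))"
    have finl: "finite (lower T j (x$j))" using fin by (simp add: lower_def)
    have pin: "p \<in> lower T j (x$j)" using Max_in[OF finl False] p_def by simp
    then have pT: "p \<in> T j" and px: "p < x$j" by (auto simp: lower_def)
    have pmax: "\<And>u. u \<in> T j \<Longrightarrow> u < x$j \<Longrightarrow> u \<le> p"
      using Max_ge[OF finl] p_def by (auto simp: lower_def)
    have split: "{u \<in> T j. u \<le> x$j} = insert (x$j) {u \<in> T j. u \<le> p}"
      using less.prems pT px pmax by force
    have notin: "x$j \<notin> {u \<in> T j. u \<le> p}" using px by auto
    have finp: "finite {u \<in> T j. u \<le> p}" using fin by simp
    have card_lt: "card {u \<in> T j. u \<le> (upd x j p)$j} < card {u \<in> T j. u \<le> x$j}"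
      using split notin finp by (simp add: card_insert_if)
    have IH: "(\<Sum>s\<in>{u \<in> T j. u \<le> p}. D1 T j g (upd x j s)) = g (upd x j p)"
      using less.hyps[OF card_lt] pT by simp
    have "(\<Sum>s\<in>{u \<in> T j. u \<le> x$j}. D1 T j g (upd x j s))
        = D1 T j g (upd x j (x$j)) + (\<Sum>s\<in>{u \<in> T j. u \<le> p}. D1 T j g (upd x j s))"
      using split notin finp by simp
    also have "D1 T j g (upd x j (x$j)) = g x - g (upd x j p)"
      using False by (simp add: D1_def p_def)
    finally show ?thesis using IH by simp
  qed
qed

lemma NS_D1_comm:
  assumes "j \<notin> set L"
  shows "NS T L (D1 T j F) x = D1 T j (NS T L F) x"
  using assms
proof (induction L arbitrary: x)
  case Nil then show ?case by simp
next
  case (Cons i L)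
  have ij: "i \<noteq> j" and jL: "j \<notin> set L" using Cons.prems by auto
  show ?case
  proof (cases "lower T j (x$j) = {}")
    case True
    then show ?thesis using Cons.IH[OF jL] ij by (simp add: D1_def)
  next
    case False
    define p where "p = Max (lower T j (x$j))"
    have "NS T (i#L) (D1 T j F) x = (\<Sum>s\<in>{u \<in> T i. u \<le> x$i}. D1 T j (NS T L F) (upd x i s))"
      using Cons.IH[OF jL] by simp
    also have "\<dots> = (\<Sum>s\<in>{u \<in> T i. u \<le> x$i}. NS T L F (upd x i s) - NS T L F (upd (upd x j p) i s))"
      using False ij by (simp add: D1_def p_def upd_comm)
    also have "\<dots> = D1 T j (NS T (i#L) F) x"
      using False ij by (simp add: D1_def p_def sum_subtractf)
    finally show ?thesis .
  qed
qed

lemma tele: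
  assumes fin: "\<And>i. finite (T i)" and "distinct L" and "\<forall>i\<in>set L. x$i \<in> T i"
  shows "NS T L (DL T L g) x = g x"
  using assms(2,3)
proof (induction L arbitrary: x g)
  case Nil then show ?case by simp
next
  case (Cons j L)
  have jL: "j \<notin> set L" and dL: "distinct L" using Cons.prems by auto
  have eq: "D1 T j (NS T L (DL T L g)) (upd x j s) = D1 T j g (upd x j s)" for s
  proof -
    have h1: "NS T L (DL T L g) (upd x j s) = g (upd x j s)"
      using Cons.IH[OF dL] Cons.prems jL by auto
    have h2: "NS T L (DL T L g) (upd (upd x j s) j r) = g (upd (upd x j s) j r)" for r
      using Cons.IH[OF dL] Cons.prems jL by auto
    show ?thesis using h1 h2 by (simp add: D1_def)
  qed
  have "NS T (j#L) (DL T (j#L) g) x = (\<Sum>s\<in>{u \<in> T j. u \<le> x$j}. D1 T j (NS T L (DL T L g)) (upd x j s))"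
    by (simp add: NS_D1_comm[OF jL])
  also have "\<dots> = (\<Sum>s\<in>{u \<in> T j. u \<le> x$j}. D1 T j g (upd x j s))"
    using eq by simp
  also have "\<dots> = g x" using tele1[of T j x g] fin Cons.prems by simp
  finally show ?case .
qed

definition Box :: "('n \<Rightarrow> real set) \<Rightarrow> 'n list \<Rightarrow> real^'n \<Rightarrow> (real^'n) set" where
  "Box T L x = {t. (\<forall>i\<in>set L. t$i \<in> T i \<and> t$i \<le> x$i) \<and> (\<forall>i. i \<notin> set L \<longrightarrow> t$i = x$i)}"

lemma finite_vecset:
  assumes "\<And>i. finite (S i)"
  shows "finite {t::real^'n. \<forall>i. t$i \<in> S i}"
proof -
  have "{t::real^'n. \<forall>i. t$i \<in> S i} \<subseteq> (\<lambda>f. \<chi> i. f i) ` (PiE UNIV S)"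
  proof
    fix t :: "real^'n" assume "t \<in> {t. \<forall>i. t$i \<in> S i}"
    then have "(\<lambda>i. t$i) \<in> PiE UNIV S" by auto
    moreover have "t = (\<chi> i. (\<lambda>i. t$i) i)" by simp
    ultimately show "t \<in> (\<lambda>f. \<chi> i. f i) ` (PiE UNIV S)" by blast
  qed
  moreover have "finite (PiE UNIV S)" using assms by (simp add: finite_PiE)
  ultimately show ?thesis using finite_subset by blast
qed

lemma finite_Box:
  fixes T :: "'n::finite \<Rightarrow> real set"
  assumes "\<And>i. finite (T i)"
  shows "finite (Box T L x)"
proof -
  have "Box T L x \<subseteq> {t::real^'n. \<forall>i. t$i \<in> insert (x$i) (T i)}" by (auto simp: Box_def)
  moreover have "finite {t::real^'n. \<forall>i. t$i \<in> insert (x$i) (T i)}"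
    using assms by (intro finite_vecset) simp
  ultimately show ?thesis using finite_subset by blast
qed

lemma NS_Box:
  assumes fin: "\<And>i. finite (T i)" and "distinct L"
  shows "NS T L F x = (\<Sum>t\<in>Box T L x. F t)"
  using assms(2)
proof (induction L arbitrary: x)
  case Nil
  have "Box T [] x = {x}" by (auto simp: Box_def vec_eq_iff)
  then show ?case by simp
next
  case (Cons j L)
  have jL: "j \<notin> set L" and dL: "distinct L" using Cons.prems by auto
  define S where "S = {u \<in> T j. u \<le> x$j}"
  have finS: "finite S" using fin by (simp add: S_def)
  have box: "Box T (j#L) x = (\<Union>s\<in>S. Box T L (upd x j s))"
  proof
    show "Box T (j#L) x \<subseteq> (\<Union>s\<in>S. Box T L (upd x j s))"
    proof
      fix t assume t: "t \<in> Box T (j#L) x"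
      then have "t$j \<in> S" by (auto simp: Box_def S_def)
      moreover have "t \<in> Box T L (upd x j (t$j))" using t jL by (auto simp: Box_def)
      ultimately show "t \<in> (\<Union>s\<in>S. Box T L (upd x j s))" by blast
    qed
  next
    show "(\<Union>s\<in>S. Box T L (upd x j s)) \<subseteq> Box T (j#L) x"
    proof
      fix t assume "t \<in> (\<Union>s\<in>S. Box T L (upd x j s))"
      then obtain s where s: "s \<in> S" and t: "t \<in> Box T L (upd x j s)" by blast
      have tj: "t$j = s" using t jL unfolding Box_def by simp
      have A: "\<forall>i\<in>set L. t$i \<in> T i \<and> t$i \<le> x$i"
      proof
        fix i assume i: "i \<in> set L"
        then have "i \<noteq> j" using jL by auto
        then show "t$i \<in> T i \<and> t$i \<le> x$i" using t i unfolding Box_def by force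
      qed
      have B: "\<forall>i. i \<notin> set (j#L) \<longrightarrow> t$i = x$i"
        using t unfolding Box_def by simp
      show "t \<in> Box T (j#L) x" using A B tj s unfolding Box_def S_def by auto
    qed
  qed
  have disj: "\<forall>s\<in>S. \<forall>s'\<in>S. s \<noteq> s' \<longrightarrow> Box T L (upd x j s) \<inter> Box T L (upd x j s') = {}"
    using jL by (auto simp: Box_def)
  have "(\<Sum>t\<in>Box T (j#L) x. F t) = (\<Sum>s\<in>S. \<Sum>t\<in>Box T L (upd x j s). F t)"
    unfolding box using finS disj finite_Box[OF fin] by (subst sum.UNION_disjoint) auto
  also have "\<dots> = NS T (j#L) F x" using Cons.IH[OF dL] by (simp add: S_def)
  finally show ?case by simp
qed

lemma pderivs_append: "pderivs (is @ js) g = pderivs is (pderivs js g)"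
  by (induction "is") auto

lemma upd_axis: "upd x j s = upd x j 0 + s *\<^sub>R axis j 1"
  by (simp add: vec_eq_iff axis_def)

lemma deriv_line:
  fixes g :: "real^'n \<Rightarrow> complex"
  assumes "g differentiable (at (upd x j s))"
  shows "((\<lambda>s. g (upd x j s)) has_vector_derivative pderiv_coord j g (upd x j s)) (at s)"
proof -
  let ?y = "upd x j s"
  have g: "(g has_derivative frechet_derivative g (at ?y)) (at ?y)"
    using assms frechet_derivative_works by blast
  have lin: "linear (frechet_derivative g (at ?y))"
    using g has_derivative_linear by blast
  have l: "((\<lambda>s. upd x j 0 + s *\<^sub>R axis j 1) has_derivative (\<lambda>h. h *\<^sub>R axis j 1)) (at s)"
    by (auto intro!: derivative_eq_intros)
  have g': "(g has_derivative frechet_derivative g (at ?y)) (at (upd x j 0 + s *\<^sub>R axis j 1))"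
    using g upd_axis[of x j s] by simp
  have "((\<lambda>s. g (upd x j 0 + s *\<^sub>R axis j 1)) has_derivative
         (\<lambda>h. frechet_derivative g (at ?y) (h *\<^sub>R axis j 1))) (at s)"
    using diff_chain_at[OF l g'] by (simp add: o_def)
  moreover have "(\<lambda>h. frechet_derivative g (at ?y) (h *\<^sub>R axis j 1)) = (\<lambda>h. h *\<^sub>R pderiv_coord j g ?y)"
    using lin by (simp add: pderiv_coord_def linear_scale fun_eq_iff)
  ultimately show ?thesis
    unfolding has_vector_derivative_def
  proof -
    assume a1: "((\<lambda>s. g (upd x j 0 + s *\<^sub>R axis j 1)) has_derivative (\<lambda>h. frechet_derivative g (at ?y) (h *\<^sub>R axis j 1))) (at s)"
    assume a2: "(\<lambda>h. frechet_derivative g (at ?y) (h *\<^sub>R axis j 1)) = (\<lambda>h. h *\<^sub>R pderiv_coord j g ?y)"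
    have "(\<lambda>s. g (upd x j s)) = (\<lambda>s. g (upd x j 0 + s *\<^sub>R axis j 1))"
      by (rule ext) (rule arg_cong[where f=g], rule upd_axis)
    then show "((\<lambda>s. g (upd x j s)) has_derivative (\<lambda>h. h *\<^sub>R pderiv_coord j g ?y)) (at s)"
      using a1 a2 by simp
  qed
qed

lemma DL_deriv:
  fixes g :: "real^'n \<Rightarrow> complex"
  assumes diff: "\<And>\<xi>. g differentiable (at \<xi>)" and "j \<notin> set L"
  shows "((\<lambda>s. DL T L g (upd x j s)) has_vector_derivative DL T L (pderiv_coord j g) (upd x j s)) (at s)"
  using assms(2)
proof (induction L arbitrary: x)
  case Nil then show ?case using deriv_line[OF diff] by simp
next
  case (Cons i L)
  have ij: "i \<noteq> j" and jL: "j \<notin> set L" using Cons.prems by auto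
  show ?case
  proof (cases "lower T i (x$i) = {}")
    case True
    then show ?thesis using Cons.IH[OF jL, of x] ij by (simp add: D1_def)
  next
    case False
    define p where "p = Max (lower T i (x$i))"
    have e1: "(\<lambda>s. DL T (i#L) g (upd x j s)) = (\<lambda>s. DL T L g (upd x j s) - DL T L g (upd (upd x i p) j s))"
      using False ij by (simp add: D1_def p_def upd_comm fun_eq_iff)
    have e2: "DL T (i#L) (pderiv_coord j g) (upd x j s) = DL T L (pderiv_coord j g) (upd x j s) - DL T L (pderiv_coord j g) (upd (upd x i p) j s)"
      using False ij by (simp add: D1_def p_def upd_comm)
    show ?thesis unfolding e1 e2
      by (intro has_vector_derivative_diff Cons.IH[OF jL])
  qed
qed

lemma DL_bound:
  fixes g :: "real^'n::finite \<Rightarrow> complex" and T :: "'n \<Rightarrow> real set"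
  assumes "distinct L" "length L \<le> n"
    and smooth: "\<And>is \<xi>. pderivs is g differentiable (at \<xi>)"
    and bnd: "\<And>is \<xi>. length is \<le> n \<Longrightarrow> cmod (pderivs is g \<xi>) \<le> B"
    and fin: "\<And>i. finite (T i)"
  shows "cmod (DL T L g t) \<le> (\<Prod>i\<in>set L. wt T i (t$i)) * B"
  using assms(1-4)
proof (induction L arbitrary: g n t)
  case Nil
  then show ?case using Nil.prems(4)[of "[]"] by simp
next
  case (Cons j L)
  have jL: "j \<notin> set L" and dL: "distinct L" using Cons.prems by auto
  have lenL: "length L \<le> n" using Cons.prems by simp
  have prod_eq: "(\<Prod>i\<in>set (j#L). wt T i (t$i)) = wt T j (t$j) * (\<Prod>i\<in>set L. wt T i (t$i))"
    using jL by simp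
  show ?case
  proof (cases "lower T j (t$j) = {}")
    case True
    have "cmod (DL T (j#L) g t) = cmod (DL T L g t)" using True by (simp add: D1_def)
    also have "\<dots> \<le> (\<Prod>i\<in>set L. wt T i (t$i)) * B"
      using Cons.IH[OF dL lenL Cons.prems(3) Cons.prems(4)] by blast
    finally show ?thesis using True prod_eq by (simp add: wt_def)
  next
    case False
    define p where "p = Max (lower T j (t$j))"
    have finl: "finite (lower T j (t$j))" using fin by (simp add: lower_def)
    have "p \<in> lower T j (t$j)" using Max_in[OF finl False] p_def by simp
    then have pt: "p < t$j" by (simp add: lower_def)
    define g' where "g' = pderiv_coord j g"
    have g'eq: "pderivs is g' = pderivs (is @ [j]) g" for "is"
      by (simp add: pderivs_append g'_def)
    have smooth': "\<And>is \<xi>. pderivs is g' differentiable (at \<xi>)"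
      using Cons.prems(3) g'eq by simp
    have n1: "n \<ge> 1" using Cons.prems(2) by simp
    have bnd': "cmod (pderivs is g' \<xi>) \<le> B" if "length is \<le> n - 1" for "is" \<xi>
    proof -
      have "length (is @ [j]) \<le> n" using n1 that by simp
      then show ?thesis using Cons.prems(4)[of "is @ [j]"] g'eq by simp
    qed
    have lenL': "length L \<le> n - 1" using Cons.prems(2) by simp
    have IH': "\<And>y. cmod (DL T L g' y) \<le> (\<Prod>i\<in>set L. wt T i (y$i)) * B"
      using Cons.IH[OF dL lenL' smooth' bnd'] by blast
    define \<phi> where "\<phi> = (\<lambda>s. DL T L g (upd t j s))"
    have gd: "\<And>\<xi>. g differentiable (at \<xi>)" using Cons.prems(3)[of "[]"] by simp
    have der: "\<And>s. (\<phi> has_vector_derivative DL T L g' (upd t j s)) (at s)"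
      unfolding \<phi>_def g'_def by (rule DL_deriv[OF gd jL])
    have cont: "continuous_on {p..t$j} \<phi>"
      using der by (meson continuous_at_imp_continuous_on has_vector_derivative_continuous)
    obtain s where s: "norm (\<phi> (t$j) - \<phi> p) \<le> norm ((\<lambda>h. h *\<^sub>R DL T L g' (upd t j s)) (t$j - p))"
      using mvt_general[OF pt cont, of "\<lambda>s h. h *\<^sub>R DL T L g' (upd t j s)"] der
      unfolding has_vector_derivative_def by blast
    have prodeq2: "(\<Prod>i\<in>set L. wt T i ((upd t j s)$i)) = (\<Prod>i\<in>set L. wt T i (t$i))"
      using jL by (intro prod.cong) auto
    have "cmod (\<phi> (t$j) - \<phi> p) \<le> (t$j - p) * cmod (DL T L g' (upd t j s))"
      using s pt by simp
    also have "\<dots> \<le> (t$j - p) * ((\<Prod>i\<in>set L. wt T i (t$i)) * B)"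
      using IH'[of "upd t j s"] prodeq2 pt by (intro mult_left_mono) auto
    finally have "cmod (\<phi> (t$j) - \<phi> p) \<le> (t$j - p) * ((\<Prod>i\<in>set L. wt T i (t$i)) * B)" .
    moreover have "DL T (j#L) g t = \<phi> (t$j) - \<phi> p"
      using False by (simp add: D1_def p_def \<phi>_def)
    moreover have "wt T j (t$j) = t$j - p" using False by (simp add: wt_def p_def)
    ultimately show ?thesis using prod_eq by (simp add: mult.assoc)
  qed
qed

lemma wt_nonneg:
  assumes "finite (T j)"
  shows "0 \<le> wt T j s"
proof (cases "lower T j s = {}")
  case True then show ?thesis by (simp add: wt_def)
next
  case False
  have finl: "finite (lower T j s)" using assms by (simp add: lower_def)
  have "Max (lower T j s) \<in> lower T j s" using Max_in[OF finl False] by simp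
  then show ?thesis using False by (simp add: wt_def lower_def)
qed

lemma wt_sum:
  fixes T :: "'n::finite \<Rightarrow> real set"
  assumes fin: "finite (T j)" and bnd: "\<forall>u\<in>T j. \<bar>u\<bar> \<le> 1"
  shows "(\<Sum>s\<in>T j. wt T j s) \<le> 3"
proof (cases "T j = {}")
  case True then show ?thesis by simp
next
  case False
  define m where "m = Max (T j)"
  define n0 where "n0 = Min (T j)"
  have mT: "m \<in> T j" using Max_in[OF fin False] m_def by simp
  have nT: "n0 \<in> T j" using Min_in[OF fin False] n0_def by simp
  define x :: "real^'n" where "x = (\<chi> i. m)"
  define g :: "real^'n \<Rightarrow> real" where "g = (\<lambda>t. t$j)"
  have Teq: "{u \<in> T j. u \<le> x$j} = T j" using Max_ge[OF fin] by (auto simp: x_def m_def)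
  have tel: "(\<Sum>s\<in>T j. D1 T j g (upd x j s)) = m"
    using tele1[of T j x g] fin mT Teq by (simp add: x_def g_def)
  have wteq: "wt T j s = D1 T j g (upd x j s) + (if lower T j s = {} then 1 - s else 0)" for s
    by (simp add: wt_def D1_def g_def)
  have low: "{s \<in> T j. lower T j s = {}} = {n0}"
  proof
    show "{s \<in> T j. lower T j s = {}} \<subseteq> {n0}"
    proof
      fix s assume s: "s \<in> {s \<in> T j. lower T j s = {}}"
      then have "n0 \<le> s" using Min_le[OF fin] n0_def by auto
      moreover have "\<not> n0 < s" using s nT unfolding lower_def by blast
      ultimately show "s \<in> {n0}" by simp
    qed
  next
    show "{n0} \<subseteq> {s \<in> T j. lower T j s = {}}"
      using nT Min_le[OF fin] n0_def unfolding lower_def by (auto simp: not_less)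
  qed
  have "(\<Sum>s\<in>T j. (if lower T j s = {} then 1 - s else 0)) = (\<Sum>s\<in>{s \<in> T j. lower T j s = {}}. 1 - s)"
    using fin by (simp add: sum.inter_filter)
  also have "\<dots> = 1 - n0" using low by simp
  finally have e2: "(\<Sum>s\<in>T j. (if lower T j s = {} then 1 - s else 0)) = 1 - n0" .
  have "(\<Sum>s\<in>T j. wt T j s) = m + (1 - n0)"
    unfolding wteq sum.distrib tel e2 by simp
  also have "\<dots> \<le> 3"
  proof -
    have "\<bar>m\<bar> \<le> 1" "\<bar>n0\<bar> \<le> 1" using bnd mT nT by auto
    then show ?thesis by linarith
  qed
  finally show ?thesis .
qed

lemma grid_wt_sum:
  fixes T :: "'n::finite \<Rightarrow> real set"
  assumes fin: "\<And>i. finite (T i)" and bnd: "\<And>i. \<forall>u\<in>T i. \<bar>u\<bar> \<le> 1"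
  shows "(\<Sum>t\<in>{t::real^'n. \<forall>i. t$i \<in> T i}. \<Prod>i\<in>UNIV. wt T i (t$i)) \<le> 3 ^ CARD('n)"
proof -
  let ?G = "{t::real^'n. \<forall>i. t$i \<in> T i}"
  have bij: "bij_betw (\<lambda>f. \<chi> i. f i) (PiE UNIV T) ?G"
  proof (rule bij_betwI')
    fix f g assume "f \<in> PiE UNIV T" "g \<in> PiE UNIV T"
    show "((\<chi> i. f i) = (\<chi> i. g i)) = (f = g)" by (auto simp: vec_eq_iff fun_eq_iff)
  next
    fix f assume "f \<in> PiE UNIV T"
    then show "(\<chi> i. f i) \<in> ?G" by auto
  next
    fix t assume t: "t \<in> ?G"
    then have "(\<lambda>i. t$i) \<in> PiE UNIV T" by auto
    moreover have "t = (\<chi> i. (\<lambda>i. t$i) i)" by simp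
    ultimately show "\<exists>f\<in>PiE UNIV T. t = (\<chi> i. f i)" by blast
  qed
  have "(\<Sum>t\<in>?G. \<Prod>i\<in>UNIV. wt T i (t$i)) = (\<Sum>f\<in>PiE UNIV T. \<Prod>i\<in>UNIV. wt T i ((\<chi> i. f i)$i))"
    using sum.reindex_bij_betw[OF bij, of "\<lambda>t. \<Prod>i\<in>UNIV. wt T i (t$i)"] by simp
  also have "\<dots> = (\<Sum>f\<in>PiE UNIV T. \<Prod>i\<in>UNIV. wt T i (f i))" by simp
  also have "\<dots> = (\<Prod>i\<in>UNIV. \<Sum>s\<in>T i. wt T i s)"
    using prod_sum_PiE[of UNIV T "\<lambda>i s. wt T i s"] fin by simp
  also have "\<dots> \<le> (\<Prod>i\<in>(UNIV::'n set). 3)"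
    using wt_sum[OF fin bnd] by (intro prod_mono) (auto intro!: sum_nonneg wt_nonneg fin)
  also have "\<dots> = 3 ^ CARD('n)" by simp
  finally show ?thesis .
qed

definition ex :: "real \<Rightarrow> complex" where
  "ex t = exp (2 * of_real pi * \<i> * of_real t)"

lemma ex_add: "ex (a + b) = ex a * ex b"
  by (simp add: ex_def distrib_left exp_add[symmetric])

lemma norm_ex[simp]: "cmod (ex t) = 1"
  by (simp add: ex_def norm_exp_eq_Re)

lemma ex_half: "ex (1/2) = -1"
proof -
  have "2 * of_real pi * \<i> * of_real (1/2) = of_real pi * \<i>" by simp
  then show ?thesis unfolding ex_def by (simp add: exp_pi_i)
qed

lemma ex_one: "ex 1 = 1"
  unfolding ex_def by (simp add: exp_two_pi_i)

lemma cnj_ex: "cnj (ex t) = ex (- t)"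
  by (simp add: ex_def exp_cnj)

definition psi :: "real \<Rightarrow> real" where
  "psi u = (max 0 (4 - u\<^sup>2))\<^sup>2"

lemma psi_nonneg: "0 \<le> psi u" by (simp add: psi_def)

lemma psi_le: "psi u \<le> 16"
proof -
  have "0 \<le> max 0 (4 - u\<^sup>2)" "max 0 (4 - u\<^sup>2) \<le> 4" by auto
  then have "(max 0 (4 - u\<^sup>2))\<^sup>2 \<le> 4\<^sup>2" by (intro power_mono) auto
  then show ?thesis by (simp add: psi_def)
qed

lemma psi_ge1: "\<bar>u\<bar> \<le> 1 \<Longrightarrow> 1 \<le> psi u"
proof -
  assume "\<bar>u\<bar> \<le> 1"
  then have "\<bar>u\<bar>\<^sup>2 \<le> 1\<^sup>2" by (intro power_mono) auto
  then have "u\<^sup>2 \<le> 1" by simp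
  then have "1 \<le> max 0 (4 - u\<^sup>2)" by simp
  then have "1\<^sup>2 \<le> (max 0 (4 - u\<^sup>2))\<^sup>2" by (intro power_mono) auto
  then show ?thesis by (simp add: psi_def)
qed

lemma psi_zero: "2 < \<bar>u\<bar> \<Longrightarrow> psi u = 0"
proof -
  assume "2 < \<bar>u\<bar>"
  then have "2\<^sup>2 < \<bar>u\<bar>\<^sup>2" by (intro power_strict_mono) auto
  then have "4 < u\<^sup>2" by simp
  then show ?thesis by (simp add: psi_def)
qed

lemma continuous_psi: "continuous_on S psi"
  unfolding psi_def by (intro continuous_intros)

lemma psi_inside: "\<bar>u\<bar> \<le> 2 \<Longrightarrow> psi u = (4 - u\<^sup>2)\<^sup>2"
proof -
  assume "\<bar>u\<bar> \<le> 2"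
  then have "\<bar>u\<bar>\<^sup>2 \<le> 2\<^sup>2" by (intro power_mono) auto
  then have "u\<^sup>2 \<le> 4" by simp
  then show ?thesis by (simp add: psi_def)
qed

lemma psi_outside_small:
  fixes v h :: real
  assumes "2 < \<bar>v\<bar>" "\<bar>v\<bar> \<le> 2 + 2*h" "h \<le> 1"
  shows "(4 - v\<^sup>2)\<^sup>2 \<le> 144 * h\<^sup>2"
proof -
  have "(4 - v\<^sup>2)\<^sup>2 = ((\<bar>v\<bar> - 2) * (\<bar>v\<bar> + 2))\<^sup>2"
    by (simp add: power2_eq_square algebra_simps)
  also have "\<dots> \<le> ((2*h) * 6)\<^sup>2"
    using assms by (intro power_mono mult_mono) auto
  also have "\<dots> = 144 * h\<^sup>2" by (simp add: power2_eq_square)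
  finally show ?thesis .
qed

lemma psi_d2_pos:
  assumes h0: "0 \<le> h" and h1: "h \<le> 1"
  shows "\<bar>psi u - 2 * psi (u + h) + psi (u + 2*h)\<bar> \<le> 1000 * h\<^sup>2"
proof (cases "2 < \<bar>u\<bar> \<and> 2 < \<bar>u + h\<bar> \<and> 2 < \<bar>u + 2*h\<bar>")
  case True
  then show ?thesis by (simp add: psi_zero)
next
  case False
  define f :: "real \<Rightarrow> real" where "f v = (4 - v\<^sup>2)\<^sup>2" for v
  define r :: "real \<Rightarrow> real" where "r v = (if \<bar>v\<bar> \<le> 2 then 0 else f v)" for v
  have pr: "psi v = f v - r v" for v
    by (cases "\<bar>v\<bar> \<le> 2") (auto simp: r_def f_def psi_inside psi_zero)
  define c where "c = u + h"
  have c3: "\<bar>c\<bar> \<le> 3" using False h0 h1 by (auto simp: c_def)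
  have near: "\<bar>v\<bar> \<le> 2 + 2*h" if "v \<in> {u, u+h, u+2*h}" for v
    using False that h0 by auto
  have rb: "0 \<le> r v \<and> r v \<le> 144 * h\<^sup>2" if "v \<in> {u, u+h, u+2*h}" for v
  proof (cases "\<bar>v\<bar> \<le> 2")
    case True then show ?thesis by (simp add: r_def)
  next
    case False
    then show ?thesis using psi_outside_small[OF _ near[OF that] h1] by (simp add: r_def f_def)
  qed
  have df: "f u - 2 * f (u+h) + f (u+2*h) = 12 * c\<^sup>2 * h\<^sup>2 + 2 * h^4 - 16 * h\<^sup>2"
    unfolding f_def c_def by algebra
  have "\<bar>c\<bar>\<^sup>2 \<le> 3\<^sup>2" using c3 by (intro power_mono) auto
  then have c2: "c\<^sup>2 \<le> 9" by simp
  have h4: "h^4 \<le> h\<^sup>2" using h0 h1 by (simp add: power_decreasing)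
  have "\<bar>f u - 2 * f (u+h) + f (u+2*h)\<bar> \<le> 126 * h\<^sup>2"
  proof -
    have "0 \<le> c\<^sup>2 * h\<^sup>2" by simp
    moreover have "c\<^sup>2 * h\<^sup>2 \<le> 9 * h\<^sup>2" using c2 by (intro mult_right_mono) auto
    moreover have "0 \<le> h^4" using h0 by simp
    moreover have "12 * c\<^sup>2 * h\<^sup>2 = 12 * (c\<^sup>2 * h\<^sup>2)" by simp
    ultimately show ?thesis unfolding df using h4 by linarith
  qed
  moreover have "psi u - 2 * psi (u + h) + psi (u + 2*h) = (f u - 2 * f (u+h) + f (u+2*h)) - (r u - 2 * r (u+h) + r (u+2*h))"
    by (simp add: pr)
  moreover have "0 \<le> r u" "r u \<le> 144 * h\<^sup>2" "0 \<le> r (u+h)" "r (u+h) \<le> 144 * h\<^sup>2" "0 \<le> r (u+2*h)" "r (u+2*h) \<le> 144 * h\<^sup>2"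
    using rb by auto
  ultimately show ?thesis by (simp add: abs_le_iff)
qed

lemma psi_d2:
  assumes "\<bar>h\<bar> \<le> 1"
  shows "\<bar>psi u - 2 * psi (u + h) + psi (u + 2*h)\<bar> \<le> 1000 * h\<^sup>2"
proof (cases "0 \<le> h")
  case True then show ?thesis using psi_d2_pos assms by simp
next
  case False
  have "\<bar>psi (u + 2*h) - 2 * psi (u + 2*h + (-h)) + psi (u + 2*h + 2*(-h))\<bar> \<le> 1000 * (-h)\<^sup>2"
    using False assms by (intro psi_d2_pos) auto
  then show ?thesis by (simp add: algebra_simps)
qed

lemma continuous_on_psi[continuous_intros]:
  assumes "continuous_on S f" shows "continuous_on S (\<lambda>x. psi (f x))"
proof -
  have "continuous_on S (psi \<circ> f)" by (rule continuous_on_compose[OF assms continuous_psi])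
  then show ?thesis by (simp add: o_def)
qed

lemma continuous_on_ex[continuous_intros]: "continuous_on S f \<Longrightarrow> continuous_on S (\<lambda>x. ex (f x))"
  unfolding ex_def by (intro continuous_intros)

definition hh :: "real^'n \<Rightarrow> 'n \<Rightarrow> real" where "hh \<eta> j = 1 / (2 * \<eta>$j)"

definition rho :: "real \<Rightarrow> real^'n \<Rightarrow> 'n set \<Rightarrow> 'n \<Rightarrow> real \<Rightarrow> real" where
  "rho R \<eta> J j u = psi (u/R) + of_bool (j \<in> J) * (psi ((u + 2 * hh \<eta> j)/R) - 2 * psi ((u + hh \<eta> j)/R))"

definition Phi :: "real \<Rightarrow> real^'n::finite \<Rightarrow> 'n set \<Rightarrow> real^'n \<Rightarrow> real" where
  "Phi R \<eta> J x = (\<Prod>j\<in>UNIV. rho R \<eta> J j (x$j))"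

lemma continuous_Phi: "continuous_on UNIV (Phi R \<eta> J)"
  unfolding Phi_def rho_def divide_inverse by (intro continuous_intros)

lemma psi_scaled_zero:
  assumes R: "R > 0" and w: "\<bar>w\<bar> > 2 * R"
  shows "psi (w / R) = 0"
proof -
  have a: "\<bar>w / R\<bar> = \<bar>w\<bar> / R" using R by (simp add: abs_divide)
  have "2 < \<bar>w\<bar> / R" using R w by (simp add: less_divide_eq)
  then have "2 < \<bar>w / R\<bar>" unfolding a .
  then show ?thesis by (rule psi_zero)
qed

lemma rho_zero:
  assumes R: "R > 0" and h: "j \<in> J \<Longrightarrow> \<bar>hh \<eta> j\<bar> \<le> R" and u: "\<bar>u\<bar> > 4 * R"
  shows "rho R \<eta> J j u = 0"
proof (cases "j \<in> J")
  case False
  have "\<bar>u\<bar> > 2 * R" using u R by linarith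
  then show ?thesis using False psi_scaled_zero[OF R] by (simp add: rho_def)
next
  case True
  have hj: "\<bar>hh \<eta> j\<bar> \<le> R" using h True by simp
  have z0: "psi (u / R) = 0" using u R by (intro psi_scaled_zero[OF R]) linarith
  have z1: "psi ((u + hh \<eta> j) / R) = 0" using u R hj by (intro psi_scaled_zero[OF R]) linarith
  have z2: "psi ((u + 2 * hh \<eta> j) / R) = 0" using u R hj by (intro psi_scaled_zero[OF R]) linarith
  show ?thesis unfolding rho_def z0 z1 z2 by simp
qed

lemma Phi_zero:
  assumes R: "R > 0" and h: "\<And>j. j \<in> J \<Longrightarrow> \<bar>hh \<eta> j\<bar> \<le> R"
    and x: "x \<notin> cbox (\<chi> i. - (4 * R)) (\<chi> i. 4 * R)"
  shows "Phi R \<eta> J x = 0"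
proof -
  obtain j where "\<not> (- (4 * R) \<le> x$j \<and> x$j \<le> 4 * R)" using x by (auto simp: mem_box_cart)
  then have "\<bar>x$j\<bar> > 4 * R" by auto
  then have "rho R \<eta> J j (x$j) = 0" using rho_zero[OF R h] by blast
  then show ?thesis unfolding Phi_def by (intro prod_zero) auto
qed

lemma rho_bound:
  assumes R: "R > 0" and h: "j \<in> J \<Longrightarrow> \<bar>hh \<eta> j\<bar> \<le> R"
  shows "\<bar>rho R \<eta> J j u\<bar> \<le> (if j \<in> J then 1000 * (hh \<eta> j / R)\<^sup>2 else 16)"
proof (cases "j \<in> J")
  case False
  then have "rho R \<eta> J j u = psi (u/R)" by (simp add: rho_def)
  moreover have "0 \<le> psi (u/R)" "psi (u/R) \<le> 16" by (rule psi_nonneg, rule psi_le)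
  ultimately show ?thesis using False by simp
next
  case True
  have a: "\<bar>hh \<eta> j / R\<bar> = \<bar>hh \<eta> j\<bar> / R" using R by simp
  have hj: "\<bar>hh \<eta> j / R\<bar> \<le> 1" unfolding a using h True R by (simp add: pos_divide_le_eq)
  have e1: "(u + hh \<eta> j) / R = u/R + hh \<eta> j / R" using R by (simp add: add_divide_distrib)
  have e2: "(u + 2 * hh \<eta> j) / R = u/R + 2 * (hh \<eta> j / R)" using R by (simp add: add_divide_distrib)
  have "\<bar>psi (u/R) - 2 * psi (u/R + hh \<eta> j / R) + psi (u/R + 2 * (hh \<eta> j / R))\<bar> \<le> 1000 * (hh \<eta> j / R)\<^sup>2"
    by (rule psi_d2[OF hj])
  moreover have "rho R \<eta> J j u = psi (u/R) - 2 * psi (u/R + hh \<eta> j / R) + psi (u/R + 2 * (hh \<eta> j / R))"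
  proof -
    have "rho R \<eta> J j u = psi (u/R) + (psi ((u + 2 * hh \<eta> j)/R) - 2 * psi ((u + hh \<eta> j)/R))"
      using True by (simp add: rho_def)
    then show ?thesis unfolding e1 e2 by linarith
  qed
  ultimately show ?thesis using True by simp
qed

lemma integrable_cont_supp:
  fixes G :: "real^'n::finite \<Rightarrow> complex"
  assumes "continuous_on UNIV G" "\<And>x. x \<notin> S \<Longrightarrow> G x = 0" "compact S"
  shows "integrable lborel G"
proof -
  have "G = (\<lambda>x. indicator S x *\<^sub>R G x)" using assms(2) by (auto simp: fun_eq_iff indicator_def)
  moreover have "integrable lborel (\<lambda>x. indicator S x *\<^sub>R G x)"
    using assms(1,3) by (intro borel_integrable_compact) (auto intro: continuous_on_subset)
  ultimately show ?thesis by simp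
qed

lemma trans_int:
  fixes G :: "real^'n::finite \<Rightarrow> complex"
  assumes "continuous_on UNIV G"
  shows "integral\<^sup>L lborel (\<lambda>x. G (x + w)) = integral\<^sup>L lborel G"
proof -
  have G: "G \<in> borel_measurable borel" using assms by (rule borel_measurable_continuous_onI)
  have m: "(+) w \<in> measurable lborel borel"
    unfolding measurable_lborel2 by (intro borel_measurable_continuous_onI continuous_intros)
  have "integral\<^sup>L lborel G = integral\<^sup>L (distr lborel borel ((+) w)) G" by (simp add: lborel_distr_plus)
  also have "\<dots> = integral\<^sup>L lborel (\<lambda>x. G (w + x))" by (rule integral_distr[OF m G])
  finally show ?thesis by (simp add: add.commute)
qed

lemma integrable_trans:
  fixes G :: "real^'n::finite \<Rightarrow> complex"
  assumes "integrable lborel G" "continuous_on UNIV G"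
  shows "integrable lborel (\<lambda>x. G (x + w))"
proof -
  have G: "G \<in> borel_measurable borel" using assms(2) by (rule borel_measurable_continuous_onI)
  have m: "(+) w \<in> measurable lborel borel"
    unfolding measurable_lborel2 by (intro borel_measurable_continuous_onI continuous_intros)
  have "integrable (distr lborel borel ((+) w)) G" using assms(1) by (simp add: lborel_distr_plus)
  then have "integrable lborel (\<lambda>x. G (w + x))" using integrable_distr_eq[OF m G] by simp
  then show ?thesis by (simp add: add.commute)
qed

definition Bset :: "real \<Rightarrow> real^'n \<Rightarrow> 'n set" where
  "Bset R \<eta> = {j. 1 \<le> 2 * R * \<bar>\<eta>$j\<bar>}"

lemma Bset_hh:
  assumes R: "R > 0" and j: "j \<in> Bset R \<eta>"
  shows "\<bar>hh \<eta> j\<bar> \<le> R" and "\<eta>$j \<noteq> 0"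
proof -
  have a: "1 \<le> 2 * R * \<bar>\<eta>$j\<bar>" using j by (simp add: Bset_def)
  then show "\<eta>$j \<noteq> 0" by auto
  then have p: "0 < 2 * \<bar>\<eta>$j\<bar>" by simp
  have "\<bar>hh \<eta> j\<bar> = 1 / (2 * \<bar>\<eta>$j\<bar>)" by (simp add: hh_def abs_mult)
  also have "\<dots> \<le> R" using a p by (simp add: divide_le_eq mult.commute mult.left_commute)
  finally show "\<bar>hh \<eta> j\<bar> \<le> R" .
qed

definition GJ :: "real \<Rightarrow> real^'n::finite \<Rightarrow> 'n set \<Rightarrow> real^'n \<Rightarrow> complex" where
  "GJ R \<eta> J x = of_real (Phi R \<eta> J x) * ex (\<eta> \<bullet> x)"

lemma continuous_GJ: "continuous_on UNIV (GJ R \<eta> J)"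
  unfolding GJ_def using continuous_Phi[of R \<eta> J]
  by (intro continuous_intros) auto

lemma integrable_GJ:
  fixes \<eta> :: "real^'n::finite"
  assumes R: "R > 0" and J: "J \<subseteq> Bset R \<eta>"
  shows "integrable lborel (GJ R \<eta> J)"
proof (rule integrable_cont_supp[OF continuous_GJ])
  show "compact (cbox (\<chi> i. - (4 * R)) (\<chi> i. 4 * R) :: (real^'n) set)" by simp
  fix x :: "real^'n" assume "x \<notin> cbox (\<chi> i. - (4 * R)) (\<chi> i. 4 * R)"
  then have "Phi R \<eta> J x = 0" using Phi_zero[OF R] Bset_hh[OF R] J by blast
  then show "GJ R \<eta> J x = 0" by (simp add: GJ_def)
qed

lemma Phi_insert:
  fixes \<eta> :: "real^'n::finite"
  assumes j: "j \<notin> J"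
  shows "Phi R \<eta> (insert j J) x = Phi R \<eta> J x - 2 * Phi R \<eta> J (x + hh \<eta> j *\<^sub>R axis j 1)
            + Phi R \<eta> J (x + (2 * hh \<eta> j) *\<^sub>R axis j 1)"
proof -
  define P where "P y = (\<Prod>i\<in>UNIV - {j}. rho R \<eta> J i (y$i))" for y :: "real^'n"
  have Psame: "P (x + c *\<^sub>R axis j 1) = P x" for c
    unfolding P_def by (intro prod.cong) (auto simp: axis_def)
  have split: "Phi R \<eta> J y = rho R \<eta> J j (y$j) * P y" for y
    unfolding Phi_def P_def by (simp add: prod.remove)
  have rins: "rho R \<eta> (insert j J) i u = rho R \<eta> J i u" if "i \<noteq> j" for i u
    using that by (simp add: rho_def)
  have "Phi R \<eta> (insert j J) x = rho R \<eta> (insert j J) j (x$j) * (\<Prod>i\<in>UNIV - {j}. rho R \<eta> (insert j J) i (x$i))"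
    unfolding Phi_def by (rule prod.remove) auto
  also have "(\<Prod>i\<in>UNIV - {j}. rho R \<eta> (insert j J) i (x$i)) = P x"
    unfolding P_def by (intro prod.cong) (auto simp: rins)
  also have "rho R \<eta> (insert j J) j (x$j) = psi (x$j/R) + (psi ((x$j + 2 * hh \<eta> j)/R) - 2 * psi ((x$j + hh \<eta> j)/R))"
    by (simp add: rho_def)
  finally have a: "Phi R \<eta> (insert j J) x = (psi (x$j/R) + (psi ((x$j + 2 * hh \<eta> j)/R) - 2 * psi ((x$j + hh \<eta> j)/R))) * P x" .
  have b: "Phi R \<eta> J x = psi (x$j/R) * P x" using split[of x] j by (simp add: rho_def)
  have c: "Phi R \<eta> J (x + hh \<eta> j *\<^sub>R axis j 1) = psi ((x$j + hh \<eta> j)/R) * P x"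
    using split[of "x + hh \<eta> j *\<^sub>R axis j 1"] j Psame by (simp add: rho_def)
  have d: "Phi R \<eta> J (x + (2 * hh \<eta> j) *\<^sub>R axis j 1) = psi ((x$j + 2 * hh \<eta> j)/R) * P x"
    using split[of "x + (2 * hh \<eta> j) *\<^sub>R axis j 1"] j Psame by (simp add: rho_def)
  show ?thesis unfolding a b c d by (simp add: algebra_simps)
qed

definition IJ :: "real \<Rightarrow> real^'n::finite \<Rightarrow> 'n set \<Rightarrow> complex" where
  "IJ R \<eta> J = integral\<^sup>L lborel (GJ R \<eta> J)"

lemma shift_int:
  "integral\<^sup>L lborel (\<lambda>x. of_real (Phi R \<eta> J (x + w)) * ex (\<eta> \<bullet> x)) = ex (- (\<eta> \<bullet> w)) * IJ R \<eta> J"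
proof -
  have "integral\<^sup>L lborel (\<lambda>x. GJ R \<eta> J (x + w)) = IJ R \<eta> J"
    unfolding IJ_def by (rule trans_int[OF continuous_GJ])
  moreover have "(\<lambda>x. GJ R \<eta> J (x + w)) = (\<lambda>x. of_real (Phi R \<eta> J (x + w)) * ex (\<eta> \<bullet> x) * ex (\<eta> \<bullet> w))"
    by (simp add: GJ_def inner_add_right ex_add fun_eq_iff)
  ultimately have h: "integral\<^sup>L lborel (\<lambda>x. of_real (Phi R \<eta> J (x + w)) * ex (\<eta> \<bullet> x)) * ex (\<eta> \<bullet> w) = IJ R \<eta> J"
    by simp
  define A where "A = integral\<^sup>L lborel (\<lambda>x. of_real (Phi R \<eta> J (x + w)) * ex (\<eta> \<bullet> x))"
  have e: "ex (\<eta> \<bullet> w) * ex (- (\<eta> \<bullet> w)) = 1"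
    using ex_add[of "\<eta> \<bullet> w" "- (\<eta> \<bullet> w)"] by (simp add: ex_def)
  have "A = A * (ex (\<eta> \<bullet> w) * ex (- (\<eta> \<bullet> w)))" using e by simp
  also have "\<dots> = (A * ex (\<eta> \<bullet> w)) * ex (- (\<eta> \<bullet> w))" by (rule mult.assoc[symmetric])
  also have "\<dots> = IJ R \<eta> J * ex (- (\<eta> \<bullet> w))" using h A_def by simp
  finally have "A = ex (- (\<eta> \<bullet> w)) * IJ R \<eta> J" by (simp add: mult.commute)
  then show ?thesis by (simp add: A_def)
qed

lemma inner_scaled_axis: "(\<eta>::real^'n::finite) \<bullet> (c *\<^sub>R axis j 1) = c * \<eta>$j"
  by (simp add: inner_axis)

lemma ex_neg_half: "ex (- (1/2)) = -1"
proof -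
  have "ex (- (1/2)) * ex (1/2) = 1" using ex_add[of "-(1/2)" "1/2"] by (simp add: ex_def)
  then show ?thesis using ex_half by (metis minus_equation_iff mult.right_neutral mult_minus_right)
qed

lemma ex_neg_one: "ex (- 1) = 1"
proof -
  have "ex (- 1) * ex 1 = 1" using ex_add[of "-1" "1"] by (simp add: ex_def)
  then show ?thesis using ex_one by simp
qed

lemma IJ_insert:
  fixes \<eta> :: "real^'n::finite"
  assumes R: "R > 0" and J: "J \<subseteq> Bset R \<eta>" and jB: "j \<in> Bset R \<eta>" and j: "j \<notin> J"
  shows "IJ R \<eta> (insert j J) = 4 * IJ R \<eta> J"
proof -
  define v :: "real^'n" where "v = hh \<eta> j *\<^sub>R axis j 1"
  define v2 :: "real^'n" where "v2 = (2 * hh \<eta> j) *\<^sub>R axis j 1"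
  have nz: "\<eta>$j \<noteq> 0" using Bset_hh[OF R jB] by simp
  have iv: "\<eta> \<bullet> v = 1/2" unfolding v_def inner_scaled_axis using nz by (simp add: hh_def)
  have iv2: "\<eta> \<bullet> v2 = 1" unfolding v2_def inner_scaled_axis using nz by (simp add: hh_def)
  define F1 where "F1 x = of_real (Phi R \<eta> J (x + v)) * ex (\<eta> \<bullet> x)" for x
  define F2 where "F2 x = of_real (Phi R \<eta> J (x + v2)) * ex (\<eta> \<bullet> x)" for x
  have iG: "integrable lborel (GJ R \<eta> J)" by (rule integrable_GJ[OF R J])
  have F1eq: "F1 = (\<lambda>x. GJ R \<eta> J (x + v) * ex (- (\<eta> \<bullet> v)))"
  proof
    fix x
    have "ex (\<eta> \<bullet> v) * ex (- (\<eta> \<bullet> v)) = 1" using ex_add[of "\<eta> \<bullet> v" "- (\<eta> \<bullet> v)"] by (simp add: ex_def)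
    then show "F1 x = GJ R \<eta> J (x + v) * ex (- (\<eta> \<bullet> v))"
      by (simp add: F1_def GJ_def inner_add_right ex_add mult.assoc)
  qed
  have F2eq: "F2 = (\<lambda>x. GJ R \<eta> J (x + v2) * ex (- (\<eta> \<bullet> v2)))"
  proof
    fix x
    have "ex (\<eta> \<bullet> v2) * ex (- (\<eta> \<bullet> v2)) = 1" using ex_add[of "\<eta> \<bullet> v2" "- (\<eta> \<bullet> v2)"] by (simp add: ex_def)
    then show "F2 x = GJ R \<eta> J (x + v2) * ex (- (\<eta> \<bullet> v2))"
      by (simp add: F2_def GJ_def inner_add_right ex_add mult.assoc)
  qed
  have iF1: "integrable lborel F1" unfolding F1eq
    by (intro integrable_mult_left integrable_trans[OF iG continuous_GJ])
  have iF2: "integrable lborel F2" unfolding F2eq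
    by (intro integrable_mult_left integrable_trans[OF iG continuous_GJ])
  have Geq: "GJ R \<eta> (insert j J) = (\<lambda>x. GJ R \<eta> J x - 2 * F1 x + F2 x)"
  proof
    fix x
    show "GJ R \<eta> (insert j J) x = GJ R \<eta> J x - 2 * F1 x + F2 x"
      unfolding GJ_def F1_def F2_def Phi_insert[OF j] v_def v2_def by (simp add: algebra_simps)
  qed
  have "IJ R \<eta> (insert j J) = IJ R \<eta> J - 2 * integral\<^sup>L lborel F1 + integral\<^sup>L lborel F2"
    unfolding IJ_def Geq using iG iF1 iF2 by simp
  also have "integral\<^sup>L lborel F1 = ex (- (\<eta> \<bullet> v)) * IJ R \<eta> J"
    unfolding F1_def by (rule shift_int)
  also have "integral\<^sup>L lborel F2 = ex (- (\<eta> \<bullet> v2)) * IJ R \<eta> J"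
    unfolding F2_def by (rule shift_int)
  finally show ?thesis unfolding iv iv2 ex_neg_half ex_neg_one by simp
qed

lemma IJ_empty:
  fixes \<eta> :: "real^'n::finite"
  assumes R: "R > 0" and J: "J \<subseteq> Bset R \<eta>"
  shows "IJ R \<eta> {} = (1/4) ^ card J * IJ R \<eta> J"
proof -
  have "finite J" by simp
  then show ?thesis using J
  proof (induction J rule: finite_induct)
    case empty then show ?case by simp
  next
    case (insert j F)
    have "IJ R \<eta> (insert j F) = 4 * IJ R \<eta> F"
      using insert by (intro IJ_insert[OF R]) auto
    then show ?case using insert by simp
  qed
qed

lemma m_bound:
  fixes \<eta> :: "real^'n::finite"
  assumes R: "R > 0"
  shows "(if j \<in> Bset R \<eta> then 1000 * (hh \<eta> j / R)\<^sup>2 else 16) \<le> 2500 / (1 + R * \<bar>\<eta>$j\<bar>)\<^sup>2"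
proof -
  define s where "s = R * \<bar>\<eta>$j\<bar>"
  have s0: "0 \<le> s" using R by (simp add: s_def)
  show ?thesis
  proof (cases "j \<in> Bset R \<eta>")
    case True
    then have s1: "1/2 \<le> s" by (simp add: Bset_def s_def)
    have nz: "\<eta>$j \<noteq> 0" using Bset_hh[OF R True] by simp
    have "(hh \<eta> j / R)\<^sup>2 = 1 / (4 * s\<^sup>2)"
      using R nz by (simp add: hh_def s_def power2_eq_square field_simps abs_mult_self_eq)
    then have l: "1000 * (hh \<eta> j / R)\<^sup>2 = 250 / s\<^sup>2" by simp
    have "1 + s \<le> 3 * s" using s1 by simp
    then have "(1 + s)\<^sup>2 \<le> (3 * s)\<^sup>2" using s0 by (intro power_mono) auto
    then have q9: "(1 + s)\<^sup>2 \<le> 9 * s\<^sup>2" by (simp add: power_mult_distrib)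
    have "0 \<le> s\<^sup>2" by simp
    then have q: "(1 + s)\<^sup>2 \<le> 10 * s\<^sup>2" using q9 by linarith
    have sp: "0 < s\<^sup>2" using s1 by simp
    have "250 / s\<^sup>2 \<le> 2500 / (1 + s)\<^sup>2"
      using q sp s0 by (simp add: divide_simps)
    then show ?thesis using True l s_def by simp
  next
    case False
    then have s1: "s < 1/2" using R by (simp add: Bset_def s_def)
    have "(1 + s)\<^sup>2 \<le> (3/2)\<^sup>2" using s0 s1 by (intro power_mono) auto
    then have q: "(1 + s)\<^sup>2 \<le> 9/4" by (simp add: power2_eq_square)
    have p: "0 < (1 + s)\<^sup>2" using s0 by simp
    have "16 \<le> 2500 / (1 + s)\<^sup>2" using q p by (simp add: le_divide_eq)
    then show ?thesis using False s_def by simp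
  qed
qed

lemma FT_bound:
  fixes \<eta> :: "real^'n::finite"
  assumes R: "R > 0"
  shows "cmod (IJ R \<eta> {}) \<le> (8 * R) ^ CARD('n) * (\<Prod>j\<in>UNIV. 2500 / (1 + R * \<bar>\<eta>$j\<bar>)\<^sup>2)"
proof -
  define J where "J = Bset R \<eta>"
  define C :: "(real^'n) set" where "C = cbox (\<chi> i. - (4 * R)) (\<chi> i. 4 * R)"
  define m where "m j = (if j \<in> J then 1000 * (hh \<eta> j / R)\<^sup>2 else 16)" for j
  define M where "M = (\<Prod>j\<in>UNIV. m j)"
  have m0: "0 \<le> m j" for j by (simp add: m_def)
  have pt: "cmod (GJ R \<eta> J x) \<le> indicator C x * M" for x
  proof (cases "x \<in> C")
    case True
    have "cmod (GJ R \<eta> J x) = \<bar>Phi R \<eta> J x\<bar>" by (simp add: GJ_def norm_mult)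
    also have "\<dots> = (\<Prod>j\<in>UNIV. \<bar>rho R \<eta> J j (x$j)\<bar>)" by (simp add: Phi_def abs_prod)
    also have "\<dots> \<le> M" unfolding M_def
    proof (intro prod_mono conjI)
      fix j :: 'n
      show "0 \<le> \<bar>rho R \<eta> J j (x$j)\<bar>" by simp
      have "j \<in> J \<Longrightarrow> \<bar>hh \<eta> j\<bar> \<le> R" using Bset_hh(1)[OF R, of j \<eta>] by (simp add: J_def)
      then show "\<bar>rho R \<eta> J j (x$j)\<bar> \<le> m j" using rho_bound[OF R, of j J \<eta> "x$j"] by (simp add: m_def)
    qed
    finally show ?thesis using True by simp
  next
    case False
    have hJ: "\<And>j. j \<in> J \<Longrightarrow> \<bar>hh \<eta> j\<bar> \<le> R" using Bset_hh(1)[OF R] by (simp add: J_def)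
    have "Phi R \<eta> J x = 0" using Phi_zero[OF R hJ] False by (simp add: C_def)
    then show ?thesis using False by (simp add: GJ_def)
  qed
  have Cm: "emeasure lborel C < \<infinity>" unfolding C_def by (rule emeasure_lborel_cbox_finite)
  have iC: "integrable lborel (\<lambda>x. indicator C x * M)"
    using Cm by (intro integrable_mult_left integrable_real_indicator) (auto simp: C_def)
  have "cmod (IJ R \<eta> J) \<le> (\<integral>x. indicator C x * M \<partial>lborel)"
  proof -
    have iG: "integrable lborel (GJ R \<eta> J)" using integrable_GJ[OF R, of J \<eta>] by (simp add: J_def)
    show ?thesis unfolding IJ_def using Bochner_Integration.integral_norm_bound_integral[OF iG iC] pt by simp
  qed
  also have "\<dots> = measure lborel C * M" by simp
  also have "measure lborel C = (8 * R) ^ CARD('n)"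
  proof -
    have "0 \<in> C" using R by (simp add: C_def mem_box_cart)
    then have ne: "C \<noteq> {}" by blast
    have "measure lborel C = (\<Prod>i\<in>(UNIV::'n set). (\<chi> i. 4 * R)$i - (\<chi> i. - (4 * R))$i)"
      using content_cbox_cart[OF ne[unfolded C_def]] by (simp add: C_def)
    then show ?thesis by simp
  qed
  finally have a: "cmod (IJ R \<eta> J) \<le> (8 * R) ^ CARD('n) * M" .
  have "cmod (IJ R \<eta> {}) = (1/4) ^ card J * cmod (IJ R \<eta> J)"
    using IJ_empty[OF R, of J \<eta>] by (simp add: J_def norm_mult norm_power)
  also have "\<dots> \<le> cmod (IJ R \<eta> J)"
    by (rule mult_left_le_one_le) (auto simp: power_le_one)
  also have "\<dots> \<le> (8 * R) ^ CARD('n) * M" by (rule a)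
  also have "\<dots> \<le> (8 * R) ^ CARD('n) * (\<Prod>j\<in>UNIV. 2500 / (1 + R * \<bar>\<eta>$j\<bar>)\<^sup>2)"
    unfolding M_def
  proof (intro mult_left_mono prod_mono conjI)
    fix j :: 'n
    show "0 \<le> m j" by (rule m0)
    show "m j \<le> 2500 / (1 + R * \<bar>\<eta>$j\<bar>)\<^sup>2" using m_bound[OF R, of j \<eta>] by (simp add: m_def J_def)
  qed (use R in simp)
  finally show ?thesis .
qed

lemma int_sum_sym:
  "(\<Sum>z\<in>{- int n..int n}. 1 / (1 + \<bar>real_of_int z\<bar>)\<^sup>2) \<le> 3 - 2 / (real n + 1)"
proof (induction n)
  case 0 then show ?case by simp
next
  case (Suc n)
  have set: "{- int (Suc n)..int (Suc n)} = insert (- int (Suc n)) (insert (int (Suc n)) {- int n..int n})"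
    by auto
  have "(\<Sum>z\<in>{- int (Suc n)..int (Suc n)}. 1 / (1 + \<bar>real_of_int z\<bar>)\<^sup>2)
      = 2 / (real n + 2)\<^sup>2 + (\<Sum>z\<in>{- int n..int n}. 1 / (1 + \<bar>real_of_int z\<bar>)\<^sup>2)"
    unfolding set by (simp add: add_ac)
  also have "\<dots> \<le> 2 / (real n + 2)\<^sup>2 + (3 - 2 / (real n + 1))" using Suc.IH by simp
  also have "\<dots> \<le> 3 - 2 / (real (Suc n) + 1)"
  proof -
    have a: "1 / (real n + 2)\<^sup>2 \<le> 1 / ((real n + 1) * (real n + 2))"
      by (intro divide_left_mono) (auto simp: power2_eq_square)
    have b: "1 / ((real n + 1) * (real n + 2)) = 1 / (real n + 1) - 1 / (real n + 2)"
      by (simp add: field_simps)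
    show ?thesis using a b by (simp add: add_ac)
  qed
  finally show ?case .
qed

lemma int_sum_le3:
  assumes "finite (Z :: int set)"
  shows "(\<Sum>z\<in>Z. 1 / (1 + \<bar>real_of_int z\<bar>)\<^sup>2) \<le> 3"
proof -
  obtain n :: nat where n: "Z \<subseteq> {- int n..int n}"
  proof -
    define m where "m = Max (insert 0 (abs ` Z))"
    have "\<forall>z\<in>Z. \<bar>z\<bar> \<le> m" using assms by (auto simp: m_def intro: Max_ge)
    moreover have "0 \<le> m" using assms by (auto simp: m_def intro: Max_ge)
    ultimately show ?thesis using that[of "nat m"] by force
  qed
  have "(\<Sum>z\<in>Z. 1 / (1 + \<bar>real_of_int z\<bar>)\<^sup>2) \<le> (\<Sum>z\<in>{- int n..int n}. 1 / (1 + \<bar>real_of_int z\<bar>)\<^sup>2)"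
    using n by (intro sum_mono2) auto
  also have "\<dots> \<le> 3 - 2 / (real n + 1)" by (rule int_sum_sym)
  also have "\<dots> \<le> 3" by simp
  finally show ?thesis .
qed

lemma floor_dist:
  fixes q :: real
  shows "\<bar>q\<bar> \<ge> \<bar>real_of_int \<lfloor>q\<rfloor>\<bar> - 1"
proof -
  have a: "real_of_int \<lfloor>q\<rfloor> \<le> q" "q < real_of_int \<lfloor>q\<rfloor> + 1" by linarith+
  then show ?thesis by (cases "0 \<le> \<lfloor>q\<rfloor>") linarith+
qed

lemma term_bound:
  fixes s R D :: real
  assumes R: "R > 0" and D: "D \<ge> 2"
  shows "1 / (1 + R * \<bar>s\<bar>)\<^sup>2 \<le> D\<^sup>2 / (1 + \<bar>real_of_int \<lfloor>D * R * s\<rfloor>\<bar>)\<^sup>2"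
proof -
  define k where "k = \<bar>real_of_int \<lfloor>D * R * s\<rfloor>\<bar>"
  have k0: "0 \<le> k" by (simp add: k_def)
  have "\<bar>D * R * s\<bar> \<ge> k - 1" unfolding k_def by (rule floor_dist)
  then have "D * (R * \<bar>s\<bar>) \<ge> k - 1" using R D by (simp add: abs_mult)
  then have "D * (1 + R * \<bar>s\<bar>) \<ge> D + k - 1" by (simp add: algebra_simps)
  then have b: "D * (1 + R * \<bar>s\<bar>) \<ge> 1 + k" using D by linarith
  have p: "0 < 1 + R * \<bar>s\<bar>" using R by (simp add: add_pos_nonneg)
  have "(1 + k)\<^sup>2 \<le> (D * (1 + R * \<bar>s\<bar>))\<^sup>2" using b k0 by (intro power_mono) auto
  then have "(1 + k)\<^sup>2 \<le> D\<^sup>2 * (1 + R * \<bar>s\<bar>)\<^sup>2" by (simp add: power_mult_distrib)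
  then show ?thesis using p k0 by (simp add: divide_simps k_def)
qed

lemma count_bound:
  fixes \<Lambda> :: "(real^'n::finite) set" and \<mu> :: "real^'n"
  assumes fin: "finite \<Lambda>" and R: "R > 0"
    and sep: "\<forall>\<mu>\<in>\<Lambda>. \<forall>\<mu>'\<in>\<Lambda>. \<mu> \<noteq> \<mu>' \<longrightarrow> dist \<mu> \<mu>' \<ge> 1 / R"
  shows "(\<Sum>\<mu>'\<in>\<Lambda>. \<Prod>j\<in>UNIV. 1 / (1 + R * \<bar>\<mu>$j - \<mu>'$j\<bar>)\<^sup>2) \<le> ((real CARD('n) + 1)\<^sup>2 * 3) ^ CARD('n)"
proof -
  define d where "d = real CARD('n)"
  define D where "D = d + 1"
  have d1: "d \<ge> 1" by (simp add: d_def)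
  have D2: "D \<ge> 2" using d1 by (simp add: D_def)
  define k where "k \<mu>' = (\<lambda>j. \<lfloor>D * R * (\<mu>'$j - \<mu>$j)\<rfloor>)" for \<mu>' :: "real^'n"
  have inj: "inj_on k \<Lambda>"
  proof (rule inj_onI, rule ccontr)
    fix a b assume a: "a \<in> \<Lambda>" and b: "b \<in> \<Lambda>" and kab: "k a = k b" and ne: "a \<noteq> b"
    have comp: "\<bar>a$j - b$j\<bar> < 1 / (D * R)" for j
    proof -
      have "\<lfloor>D * R * (a$j - \<mu>$j)\<rfloor> = \<lfloor>D * R * (b$j - \<mu>$j)\<rfloor>" using kab by (metis k_def)
      then have "\<bar>D * R * (a$j - \<mu>$j) - D * R * (b$j - \<mu>$j)\<bar> < 1" by linarith
      moreover have "D * R * (a$j - \<mu>$j) - D * R * (b$j - \<mu>$j) = (D * R) * (a$j - b$j)"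
        by (simp add: algebra_simps)
      moreover have "\<bar>(D * R) * (a$j - b$j)\<bar> = D * R * \<bar>a$j - b$j\<bar>"
        using R D2 by (simp add: abs_mult)
      ultimately have "D * R * \<bar>a$j - b$j\<bar> < 1" by simp
      then show ?thesis using R D2 by (simp add: field_simps)
    qed
    have "dist a b \<le> (\<Sum>j\<in>UNIV. \<bar>(a - b)$j\<bar>)" unfolding dist_norm by (rule norm_le_l1_cart)
    also have "\<dots> < (\<Sum>j\<in>(UNIV::'n set). 1 / (D * R))"
      using comp by (intro sum_strict_mono) auto
    also have "\<dots> = d / (D * R)" by (simp add: d_def)
    also have "\<dots> < 1 / R"
    proof -
      have e: "d / (D * R) = (d / D) * (1 / R)" by simp
      have "d / D < 1" using d1 by (simp add: D_def)
      moreover have "0 < 1 / R" using R by simp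
      ultimately have "(d / D) * (1 / R) < 1 * (1 / R)" by (rule mult_strict_right_mono)
      then show ?thesis unfolding e by simp
    qed
    finally show False using sep a b ne by fastforce
  qed
  define f where "f z = D\<^sup>2 / (1 + \<bar>real_of_int z\<bar>)\<^sup>2" for z :: int
  have f0: "0 \<le> f z" for z by (simp add: f_def)
  have "(\<Sum>\<mu>'\<in>\<Lambda>. \<Prod>j\<in>UNIV. 1 / (1 + R * \<bar>\<mu>$j - \<mu>'$j\<bar>)\<^sup>2) \<le> (\<Sum>\<mu>'\<in>\<Lambda>. \<Prod>j\<in>UNIV. f (k \<mu>' j))"
  proof (intro sum_mono prod_mono conjI)
    fix \<mu>' j
    show "0 \<le> 1 / (1 + R * \<bar>\<mu>$j - \<mu>'$j\<bar>)\<^sup>2" by simp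
    have "\<bar>\<mu>$j - \<mu>'$j\<bar> = \<bar>\<mu>'$j - \<mu>$j\<bar>" by simp
    then show "1 / (1 + R * \<bar>\<mu>$j - \<mu>'$j\<bar>)\<^sup>2 \<le> f (k \<mu>' j)"
      using term_bound[OF R D2, of "\<mu>'$j - \<mu>$j"] by (simp add: f_def k_def)
  qed
  also have "\<dots> = (\<Sum>\<kappa>\<in>k ` \<Lambda>. \<Prod>j\<in>UNIV. f (\<kappa> j))" using sum.reindex[OF inj, of "\<lambda>\<kappa>. \<Prod>j\<in>UNIV. f (\<kappa> j)"] by simp
  also have "\<dots> \<le> (\<Sum>\<kappa>\<in>PiE UNIV (\<lambda>j. (\<lambda>\<kappa>. \<kappa> j) ` k ` \<Lambda>). \<Prod>j\<in>UNIV. f (\<kappa> j))"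
    using fin f0 by (intro sum_mono2 finite_PiE) (auto intro: prod_nonneg)
  also have "\<dots> = (\<Prod>j\<in>UNIV. \<Sum>z\<in>(\<lambda>\<kappa>. \<kappa> j) ` k ` \<Lambda>. f z)"
    using prod_sum_PiE[of UNIV "\<lambda>j. (\<lambda>\<kappa>. \<kappa> j) ` k ` \<Lambda>" "\<lambda>j z. f z"] fin by simp
  also have "\<dots> \<le> (\<Prod>j\<in>(UNIV::'n set). D\<^sup>2 * 3)"
  proof (intro prod_mono conjI)
    fix j :: 'n
    show "0 \<le> (\<Sum>z\<in>(\<lambda>\<kappa>. \<kappa> j) ` k ` \<Lambda>. f z)" using f0 by (intro sum_nonneg) auto
    have "(\<Sum>z\<in>(\<lambda>\<kappa>. \<kappa> j) ` k ` \<Lambda>. f z) = D\<^sup>2 * (\<Sum>z\<in>(\<lambda>\<kappa>. \<kappa> j) ` k ` \<Lambda>. 1 / (1 + \<bar>real_of_int z\<bar>)\<^sup>2)"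
      by (simp add: f_def sum_distrib_left)
    also have "\<dots> \<le> D\<^sup>2 * 3" using fin by (intro mult_left_mono int_sum_le3) auto
    finally show "(\<Sum>z\<in>(\<lambda>\<kappa>. \<kappa> j) ` k ` \<Lambda>. f z) \<le> D\<^sup>2 * 3" .
  qed
  also have "\<dots> = ((real CARD('n) + 1)\<^sup>2 * 3) ^ CARD('n)" by (simp add: D_def d_def)
  finally show ?thesis .
qed

definition CA :: "nat \<Rightarrow> real" where "CA d = (8 * 2500 * ((real d + 1)\<^sup>2 * 3)) ^ d"

lemma integrable_cont_supp_real:
  fixes G :: "real^'n::finite \<Rightarrow> real"
  assumes "continuous_on UNIV G" "\<And>x. x \<notin> S \<Longrightarrow> G x = 0" "compact S"
  shows "integrable lborel G"
proof -
  have "G = (\<lambda>x. indicator S x *\<^sub>R G x)" using assms(2) by (auto simp: fun_eq_iff indicator_def)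
  moreover have "integrable lborel (\<lambda>x. indicator S x *\<^sub>R G x)"
    using assms(1,3) by (intro borel_integrable_compact) (auto intro: continuous_on_subset)
  ultimately show ?thesis by simp
qed

lemma S_sq:
  fixes c :: "real^'n::finite \<Rightarrow> complex"
  shows "complex_of_real ((cmod (\<Sum>\<mu>\<in>\<Lambda>. c \<mu> * ex (\<mu> \<bullet> x)))\<^sup>2)
     = (\<Sum>\<mu>\<in>\<Lambda>. \<Sum>\<mu>'\<in>\<Lambda>. c \<mu> * cnj (c \<mu>') * ex ((\<mu> - \<mu>') \<bullet> x))"
proof -
  have "complex_of_real ((cmod (\<Sum>\<mu>\<in>\<Lambda>. c \<mu> * ex (\<mu> \<bullet> x)))\<^sup>2)
      = (\<Sum>\<mu>\<in>\<Lambda>. c \<mu> * ex (\<mu> \<bullet> x)) * (\<Sum>\<mu>'\<in>\<Lambda>. cnj (c \<mu>') * ex (- (\<mu>' \<bullet> x)))"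
  proof -
    have "complex_of_real ((cmod (\<Sum>\<mu>\<in>\<Lambda>. c \<mu> * ex (\<mu> \<bullet> x)))\<^sup>2) = (\<Sum>\<mu>\<in>\<Lambda>. c \<mu> * ex (\<mu> \<bullet> x)) * cnj (\<Sum>\<mu>\<in>\<Lambda>. c \<mu> * ex (\<mu> \<bullet> x))"
      by (rule complex_norm_square)
    moreover have "cnj (\<Sum>\<mu>\<in>\<Lambda>. c \<mu> * ex (\<mu> \<bullet> x)) = (\<Sum>\<mu>'\<in>\<Lambda>. cnj (c \<mu>') * ex (- (\<mu>' \<bullet> x)))"
      by (simp add: cnj_ex)
    ultimately show ?thesis by simp
  qed
  also have "\<dots> = (\<Sum>\<mu>\<in>\<Lambda>. \<Sum>\<mu>'\<in>\<Lambda>. (c \<mu> * ex (\<mu> \<bullet> x)) * (cnj (c \<mu>') * ex (- (\<mu>' \<bullet> x))))"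
    by (rule sum_product)
  also have "\<dots> = (\<Sum>\<mu>\<in>\<Lambda>. \<Sum>\<mu>'\<in>\<Lambda>. c \<mu> * cnj (c \<mu>') * ex ((\<mu> - \<mu>') \<bullet> x))"
  proof (intro sum.cong refl)
    fix \<mu> \<mu>'
    have "ex ((\<mu> - \<mu>') \<bullet> x) = ex (\<mu> \<bullet> x) * ex (- (\<mu>' \<bullet> x))"
      by (simp add: inner_diff_left ex_add[symmetric])
    then show "(c \<mu> * ex (\<mu> \<bullet> x)) * (cnj (c \<mu>') * ex (- (\<mu>' \<bullet> x))) = c \<mu> * cnj (c \<mu>') * ex ((\<mu> - \<mu>') \<bullet> x)"
      by (simp add: algebra_simps)
  qed
  finally show ?thesis .
qed

lemma IJ_bound:
  fixes \<eta> :: "real^'n::finite"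
  assumes R: "R > 0"
  shows "cmod (IJ R \<eta> {}) \<le> (8 * R) ^ CARD('n) * 2500 ^ CARD('n) * (\<Prod>j\<in>UNIV. 1 / (1 + R * \<bar>\<eta>$j\<bar>)\<^sup>2)"
proof -
  have "(\<Prod>j\<in>UNIV. 2500 / (1 + R * \<bar>\<eta>$j\<bar>)\<^sup>2) = (\<Prod>j\<in>(UNIV::'n set). 2500 * (1 / (1 + R * \<bar>\<eta>$j\<bar>)\<^sup>2))"
    by simp
  also have "\<dots> = (\<Prod>j\<in>(UNIV::'n set). 2500) * (\<Prod>j\<in>UNIV. 1 / (1 + R * \<bar>\<eta>$j\<bar>)\<^sup>2)"
    by (rule prod.distrib)
  also have "\<dots> = 2500 ^ CARD('n) * (\<Prod>j\<in>UNIV. 1 / (1 + R * \<bar>\<eta>$j\<bar>)\<^sup>2)"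
    by simp
  finally show ?thesis using FT_bound[OF R, of \<eta>] by (simp add: mult.assoc)
qed

lemma schur:
  fixes \<Lambda> :: "(real^'n::finite) set" and c :: "real^'n \<Rightarrow> complex"
  assumes fin: "finite \<Lambda>" and R: "R > 0"
    and sep: "\<forall>\<mu>\<in>\<Lambda>. \<forall>\<mu>'\<in>\<Lambda>. \<mu> \<noteq> \<mu>' \<longrightarrow> dist \<mu> \<mu>' \<ge> 1 / R"
  shows "(\<Sum>\<mu>\<in>\<Lambda>. \<Sum>\<mu>'\<in>\<Lambda>. cmod (c \<mu>) * cmod (c \<mu>') * (\<Prod>j\<in>UNIV. 1 / (1 + R * \<bar>(\<mu> - \<mu>')$j\<bar>)\<^sup>2))
         \<le> ((real CARD('n) + 1)\<^sup>2 * 3) ^ CARD('n) * (\<Sum>\<mu>\<in>\<Lambda>. (cmod (c \<mu>))\<^sup>2)"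
proof -
  define P where "P \<mu> \<mu>' = (\<Prod>j\<in>UNIV. 1 / (1 + R * \<bar>(\<mu> - \<mu>')$j\<bar>)\<^sup>2)" for \<mu> \<mu>' :: "real^'n"
  define CC where "CC = ((real CARD('n) + 1)\<^sup>2 * 3) ^ CARD('n)"
  have P0: "0 \<le> P \<mu> \<mu>'" for \<mu> \<mu>' by (simp add: P_def prod_nonneg)
  have Psym: "P \<mu> \<mu>' = P \<mu>' \<mu>" for \<mu> \<mu>' unfolding P_def by (intro prod.cong) (auto simp: abs_minus_commute)
  have rowsum: "(\<Sum>\<mu>'\<in>\<Lambda>. P \<mu> \<mu>') \<le> CC" for \<mu>
    using count_bound[OF fin R sep, of \<mu>] by (simp add: P_def CC_def)
  have amgm: "cmod (c \<mu>) * cmod (c \<mu>') * P \<mu> \<mu>' \<le> ((cmod (c \<mu>))\<^sup>2 * P \<mu> \<mu>' + (cmod (c \<mu>'))\<^sup>2 * P \<mu> \<mu>') / 2" for \<mu> \<mu>'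
  proof -
    have "2 * (cmod (c \<mu>) * cmod (c \<mu>')) \<le> (cmod (c \<mu>))\<^sup>2 + (cmod (c \<mu>'))\<^sup>2"
    proof -
      have "0 \<le> (cmod (c \<mu>) - cmod (c \<mu>'))\<^sup>2" by simp
      then show ?thesis by (simp add: power2_diff)
    qed
    then have "2 * (cmod (c \<mu>) * cmod (c \<mu>')) * P \<mu> \<mu>' \<le> ((cmod (c \<mu>))\<^sup>2 + (cmod (c \<mu>'))\<^sup>2) * P \<mu> \<mu>'"
      using P0 by (rule mult_right_mono)
    then show ?thesis by (simp add: algebra_simps)
  qed
  have "(\<Sum>\<mu>\<in>\<Lambda>. \<Sum>\<mu>'\<in>\<Lambda>. cmod (c \<mu>) * cmod (c \<mu>') * P \<mu> \<mu>')
      \<le> (\<Sum>\<mu>\<in>\<Lambda>. \<Sum>\<mu>'\<in>\<Lambda>. ((cmod (c \<mu>))\<^sup>2 * P \<mu> \<mu>' + (cmod (c \<mu>'))\<^sup>2 * P \<mu> \<mu>') / 2)"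
    using amgm by (intro sum_mono) auto
  also have "\<dots> = ((\<Sum>\<mu>\<in>\<Lambda>. \<Sum>\<mu>'\<in>\<Lambda>. (cmod (c \<mu>))\<^sup>2 * P \<mu> \<mu>') + (\<Sum>\<mu>\<in>\<Lambda>. \<Sum>\<mu>'\<in>\<Lambda>. (cmod (c \<mu>'))\<^sup>2 * P \<mu> \<mu>')) / 2"
    by (simp only: sum_divide_distrib[symmetric] sum.distrib)
  also have "(\<Sum>\<mu>\<in>\<Lambda>. \<Sum>\<mu>'\<in>\<Lambda>. (cmod (c \<mu>'))\<^sup>2 * P \<mu> \<mu>') = (\<Sum>\<mu>\<in>\<Lambda>. \<Sum>\<mu>'\<in>\<Lambda>. (cmod (c \<mu>))\<^sup>2 * P \<mu> \<mu>')"
    by (subst sum.swap) (simp add: Psym)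
  also have "(\<Sum>\<mu>\<in>\<Lambda>. \<Sum>\<mu>'\<in>\<Lambda>. (cmod (c \<mu>))\<^sup>2 * P \<mu> \<mu>') = (\<Sum>\<mu>\<in>\<Lambda>. (cmod (c \<mu>))\<^sup>2 * (\<Sum>\<mu>'\<in>\<Lambda>. P \<mu> \<mu>'))"
    by (simp add: sum_distrib_left)
  also have "(\<Sum>\<mu>\<in>\<Lambda>. (cmod (c \<mu>))\<^sup>2 * (\<Sum>\<mu>'\<in>\<Lambda>. P \<mu> \<mu>')) \<le> (\<Sum>\<mu>\<in>\<Lambda>. (cmod (c \<mu>))\<^sup>2 * CC)"
    using rowsum by (intro sum_mono mult_left_mono) auto
  finally show ?thesis by (simp add: P_def CC_def sum_distrib_right mult.commute)
qed

lemma Phi_empty: "Phi R \<eta> {} x = (\<Prod>j\<in>UNIV. psi (x$j / R))"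
  by (simp add: Phi_def rho_def)

lemma base_ineq:
  fixes \<Lambda> :: "(real^'n::finite) set" and c :: "real^'n \<Rightarrow> complex"
  assumes fin: "finite \<Lambda>" and R: "R > 0"
    and sep: "\<forall>\<mu>\<in>\<Lambda>. \<forall>\<mu>'\<in>\<Lambda>. \<mu> \<noteq> \<mu>' \<longrightarrow> dist \<mu> \<mu>' \<ge> 1 / R"
  shows "(LINT x : ball 0 R | lebesgue. (cmod (\<Sum>\<mu>\<in>\<Lambda>. c \<mu> * ex (\<mu> \<bullet> x)))\<^sup>2)
          \<le> CA CARD('n) * R ^ CARD('n) * (\<Sum>\<mu>\<in>\<Lambda>. (cmod (c \<mu>))\<^sup>2)"
proof -
  define S where "S x = (\<Sum>\<mu>\<in>\<Lambda>. c \<mu> * ex (\<mu> \<bullet> x))" for x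
  define \<phi> where "\<phi> x = (\<Prod>j\<in>UNIV. psi (x$j / R))" for x :: "real^'n"
  define P where "P \<eta> = (\<Prod>j\<in>UNIV. 1 / (1 + R * \<bar>\<eta>$j\<bar>)\<^sup>2)" for \<eta> :: "real^'n"
  define K1 where "K1 = (8 * R) ^ CARD('n) * 2500 ^ CARD('n)"
  define CC where "CC = ((real CARD('n) + 1)\<^sup>2 * 3) ^ CARD('n)"
  have K10: "0 \<le> K1" using R by (simp add: K1_def)
  have contS: "continuous_on UNIV S" unfolding S_def by (intro continuous_intros)
  have contphi: "continuous_on UNIV \<phi>" unfolding \<phi>_def divide_inverse by (intro continuous_intros)
  have phiPhi: "\<phi> x = Phi R \<eta> {} x" for x \<eta> by (simp add: Phi_empty \<phi>_def)
  have phi0: "0 \<le> \<phi> x" for x by (simp add: \<phi>_def prod_nonneg psi_nonneg)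
  define C :: "(real^'n) set" where "C = cbox (\<chi> i. - (4 * R)) (\<chi> i. 4 * R)"
  have phisupp: "\<phi> x = 0" if "x \<notin> C" for x
    using Phi_zero[OF R, of "{}" 0 x] that phiPhi[of x 0] by (simp add: C_def)
  have iF: "integrable lborel (\<lambda>x. \<phi> x * (cmod (S x))\<^sup>2)"
  proof (rule integrable_cont_supp_real)
    show "continuous_on UNIV (\<lambda>x. \<phi> x * (cmod (S x))\<^sup>2)" using contS contphi by (intro continuous_intros)
    show "compact C" by (simp add: C_def)
    show "\<phi> x * (cmod (S x))\<^sup>2 = 0" if "x \<notin> C" for x using phisupp[OF that] by simp
  qed
  have iG: "integrable lborel (GJ R \<eta> {})" for \<eta> using integrable_GJ[OF R, of "{}" \<eta>] by simp
  have pw: "complex_of_real (\<phi> x * (cmod (S x))\<^sup>2) = (\<Sum>\<mu>\<in>\<Lambda>. \<Sum>\<mu>'\<in>\<Lambda>. c \<mu> * cnj (c \<mu>') * GJ R (\<mu> - \<mu>') {} x)" for x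
  proof -
    have "complex_of_real (\<phi> x * (cmod (S x))\<^sup>2) = of_real (\<phi> x) * complex_of_real ((cmod (S x))\<^sup>2)" by simp
    also have "\<dots> = of_real (\<phi> x) * (\<Sum>\<mu>\<in>\<Lambda>. \<Sum>\<mu>'\<in>\<Lambda>. c \<mu> * cnj (c \<mu>') * ex ((\<mu> - \<mu>') \<bullet> x))"
      unfolding S_def by (simp only: S_sq)
    also have "\<dots> = (\<Sum>\<mu>\<in>\<Lambda>. \<Sum>\<mu>'\<in>\<Lambda>. c \<mu> * cnj (c \<mu>') * GJ R (\<mu> - \<mu>') {} x)"
      by (simp add: sum_distrib_left GJ_def phiPhi[symmetric] algebra_simps)
    finally show ?thesis .
  qed
  have "complex_of_real (integral\<^sup>L lborel (\<lambda>x. \<phi> x * (cmod (S x))\<^sup>2))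
      = integral\<^sup>L lborel (\<lambda>x. \<Sum>\<mu>\<in>\<Lambda>. \<Sum>\<mu>'\<in>\<Lambda>. c \<mu> * cnj (c \<mu>') * GJ R (\<mu> - \<mu>') {} x)"
    by (simp only: integral_complex_of_real[symmetric] pw)
  also have "\<dots> = (\<Sum>\<mu>\<in>\<Lambda>. \<Sum>\<mu>'\<in>\<Lambda>. c \<mu> * cnj (c \<mu>') * IJ R (\<mu> - \<mu>') {})"
  proof -
    have i1: "integrable lborel (\<lambda>x. c \<mu> * cnj (c \<mu>') * GJ R (\<mu> - \<mu>') {} x)" for \<mu> \<mu>'
      by (intro integrable_mult_right iG)
    have "integral\<^sup>L lborel (\<lambda>x. \<Sum>\<mu>\<in>\<Lambda>. \<Sum>\<mu>'\<in>\<Lambda>. c \<mu> * cnj (c \<mu>') * GJ R (\<mu> - \<mu>') {} x)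
        = (\<Sum>\<mu>\<in>\<Lambda>. integral\<^sup>L lborel (\<lambda>x. \<Sum>\<mu>'\<in>\<Lambda>. c \<mu> * cnj (c \<mu>') * GJ R (\<mu> - \<mu>') {} x))"
      by (rule Bochner_Integration.integral_sum) (intro Bochner_Integration.integrable_sum i1)
    also have "\<dots> = (\<Sum>\<mu>\<in>\<Lambda>. \<Sum>\<mu>'\<in>\<Lambda>. integral\<^sup>L lborel (\<lambda>x. c \<mu> * cnj (c \<mu>') * GJ R (\<mu> - \<mu>') {} x))"
      by (intro sum.cong refl Bochner_Integration.integral_sum i1)
    also have "\<dots> = (\<Sum>\<mu>\<in>\<Lambda>. \<Sum>\<mu>'\<in>\<Lambda>. c \<mu> * cnj (c \<mu>') * IJ R (\<mu> - \<mu>') {})"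
      by (simp add: IJ_def)
    finally show ?thesis .
  qed
  finally have ident: "complex_of_real (integral\<^sup>L lborel (\<lambda>x. \<phi> x * (cmod (S x))\<^sup>2))
      = (\<Sum>\<mu>\<in>\<Lambda>. \<Sum>\<mu>'\<in>\<Lambda>. c \<mu> * cnj (c \<mu>') * IJ R (\<mu> - \<mu>') {})" .
  have "integral\<^sup>L lborel (\<lambda>x. \<phi> x * (cmod (S x))\<^sup>2) \<le> cmod (complex_of_real (integral\<^sup>L lborel (\<lambda>x. \<phi> x * (cmod (S x))\<^sup>2)))"
    by simp
  also have "\<dots> \<le> (\<Sum>\<mu>\<in>\<Lambda>. \<Sum>\<mu>'\<in>\<Lambda>. cmod (c \<mu> * cnj (c \<mu>') * IJ R (\<mu> - \<mu>') {}))"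
    unfolding ident by (intro order_trans[OF norm_sum] sum_mono) (auto intro: order_trans[OF norm_sum])
  also have "\<dots> \<le> (\<Sum>\<mu>\<in>\<Lambda>. \<Sum>\<mu>'\<in>\<Lambda>. cmod (c \<mu>) * cmod (c \<mu>') * (K1 * P (\<mu> - \<mu>')))"
  proof (intro sum_mono)
    fix \<mu> \<mu>'
    have "cmod (IJ R (\<mu> - \<mu>') {}) \<le> K1 * P (\<mu> - \<mu>')"
      using IJ_bound[OF R, of "\<mu> - \<mu>'"] by (simp add: K1_def P_def)
    then show "cmod (c \<mu> * cnj (c \<mu>') * IJ R (\<mu> - \<mu>') {}) \<le> cmod (c \<mu>) * cmod (c \<mu>') * (K1 * P (\<mu> - \<mu>'))"
      by (simp add: norm_mult mult_left_mono)
  qed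
  also have "\<dots> = K1 * (\<Sum>\<mu>\<in>\<Lambda>. \<Sum>\<mu>'\<in>\<Lambda>. cmod (c \<mu>) * cmod (c \<mu>') * P (\<mu> - \<mu>'))"
    by (simp add: sum_distrib_left algebra_simps)
  also have "\<dots> \<le> K1 * (CC * (\<Sum>\<mu>\<in>\<Lambda>. (cmod (c \<mu>))\<^sup>2))"
    using schur[OF fin R sep, of c] K10 by (intro mult_left_mono) (simp_all add: P_def CC_def)
  finally have phibound: "integral\<^sup>L lborel (\<lambda>x. \<phi> x * (cmod (S x))\<^sup>2) \<le> K1 * (CC * (\<Sum>\<mu>\<in>\<Lambda>. (cmod (c \<mu>))\<^sup>2))" .
  have meas: "(\<lambda>x. indicator (ball 0 R) x * (cmod (S x))\<^sup>2) \<in> borel_measurable lborel"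
  proof -
    have "continuous_on UNIV (\<lambda>x. (cmod (S x))\<^sup>2)" using contS by (intro continuous_intros)
    then have "(\<lambda>x. (cmod (S x))\<^sup>2) \<in> borel_measurable borel" by (rule borel_measurable_continuous_onI)
    then show ?thesis by (intro borel_measurable_times borel_measurable_indicator) auto
  qed
  have "(LINT x : ball 0 R | lebesgue. (cmod (S x))\<^sup>2) = integral\<^sup>L lebesgue (\<lambda>x. indicator (ball 0 R) x * (cmod (S x))\<^sup>2)"
    by (simp add: set_lebesgue_integral_def)
  also have "\<dots> = integral\<^sup>L lborel (\<lambda>x. indicator (ball 0 R) x * (cmod (S x))\<^sup>2)"
    using meas by (rule integral_completion)
  also have "\<dots> \<le> integral\<^sup>L lborel (\<lambda>x. \<phi> x * (cmod (S x))\<^sup>2)"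
  proof (rule integral_mono'[OF iF])
    fix x :: "real^'n"
    show "0 \<le> \<phi> x * (cmod (S x))\<^sup>2" using phi0 by simp
    show "indicator (ball 0 R) x * (cmod (S x))\<^sup>2 \<le> \<phi> x * (cmod (S x))\<^sup>2"
    proof (cases "x \<in> ball 0 R")
      case True
      have "1 \<le> \<phi> x" unfolding \<phi>_def
      proof (rule prod_ge_1)
        fix j :: 'n
        have "\<bar>x$j\<bar> \<le> norm x" by (rule component_le_norm_cart)
        also have "\<dots> < R" using True by simp
        finally have "\<bar>x$j / R\<bar> \<le> 1" using R by (simp add: abs_divide)
        then show "1 \<le> psi (x$j / R)" by (rule psi_ge1)
      qed
      then have "1 * (cmod (S x))\<^sup>2 \<le> \<phi> x * (cmod (S x))\<^sup>2" by (intro mult_right_mono) auto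
      then show ?thesis using True by simp
    next
      case False
      then show ?thesis using phi0 by simp
    qed
  qed
  also have "\<dots> \<le> K1 * (CC * (\<Sum>\<mu>\<in>\<Lambda>. (cmod (c \<mu>))\<^sup>2))" by (rule phibound)
  also have "\<dots> = CA CARD('n) * R ^ CARD('n) * (\<Sum>\<mu>\<in>\<Lambda>. (cmod (c \<mu>))\<^sup>2)"
  proof -
    have "K1 * CC = ((8 * R) * 2500 * ((real CARD('n) + 1)\<^sup>2 * 3)) ^ CARD('n)"
      unfolding K1_def CC_def by (simp only: power_mult_distrib)
    also have "\<dots> = (8 * 2500 * ((real CARD('n) + 1)\<^sup>2 * 3) * R) ^ CARD('n)"
      by (simp only: mult_ac)
    also have "\<dots> = CA CARD('n) * R ^ CARD('n)"
      unfolding CA_def by (simp only: power_mult_distrib)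
    finally show ?thesis by (simp add: mult.assoc)
  qed
  finally show ?thesis unfolding S_def .
qed

lemma integrable_ball_cont:
  fixes h :: "real^'n::finite \<Rightarrow> real"
  assumes "continuous_on UNIV h"
  shows "integrable lebesgue (\<lambda>x. indicator (ball 0 R) x * h x)"
proof -
  have hm: "h \<in> borel_measurable borel" using assms by (rule borel_measurable_continuous_onI)
  have ic: "integrable lborel (\<lambda>x. indicator (cball 0 R) x *\<^sub>R h x)"
    using assms by (intro borel_integrable_compact) (auto intro: continuous_on_subset)
  have "integrable lborel (\<lambda>x. indicator (ball 0 R) x *\<^sub>R (indicator (cball 0 R) x *\<^sub>R h x))"
    by (rule integrable_mult_indicator[OF _ ic]) auto
  moreover have "(\<lambda>x. indicator (ball 0 R) x *\<^sub>R (indicator (cball 0 R) x *\<^sub>R h x)) = (\<lambda>x. indicator (ball 0 R) x * h x)"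
    by (auto simp: fun_eq_iff indicator_def)
  ultimately have i: "integrable lborel (\<lambda>x. indicator (ball 0 R) x * h x)" by simp
  have m: "(\<lambda>x. indicator (ball 0 R) x * h x) \<in> borel_measurable lborel"
    using hm by (intro borel_measurable_times borel_measurable_indicator) auto
  show ?thesis using integrable_completion[OF m] i by simp
qed

lemma weighted_CS:
  fixes w g :: "'a \<Rightarrow> real"
  assumes "\<And>t. t \<in> A \<Longrightarrow> 0 \<le> w t"
  shows "(\<Sum>t\<in>A. w t * g t)\<^sup>2 \<le> (\<Sum>t\<in>A. w t) * (\<Sum>t\<in>A. w t * (g t)\<^sup>2)"
proof -
  have "(\<Sum>t\<in>A. w t * g t) = (\<Sum>t\<in>A. sqrt (w t) * (sqrt (w t) * g t))"
    using assms by (intro sum.cong) (auto simp: mult.assoc[symmetric])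
  also have "(\<dots>)\<^sup>2 \<le> (\<Sum>t\<in>A. (sqrt (w t))\<^sup>2) * (\<Sum>t\<in>A. (sqrt (w t) * g t)\<^sup>2)"
    by (rule Cauchy_Schwarz_ineq_sum)
  also have "\<dots> = (\<Sum>t\<in>A. w t) * (\<Sum>t\<in>A. w t * (g t)\<^sup>2)"
    using assms by (simp add: power_mult_distrib)
  finally show ?thesis .
qed

lemma main_bound:
  fixes a :: "real^'n::finite \<Rightarrow> real^'n \<Rightarrow> complex" and \<Lambda> :: "(real^'n) set"
    and b :: "real^'n \<Rightarrow> complex" and M \<nu> R :: real
  assumes smooth: "\<forall>x. smooth_fun (\<lambda>\<xi>. a x \<xi>)"
    and bnd: "\<forall>x \<xi> (is :: 'n list). length is \<le> CARD('n) \<longrightarrow>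
            cmod (pderivs is (\<lambda>\<eta>. a x \<eta>) \<xi>) \<le> M * jbr x powr (\<nu> / 2)"
    and meas: "\<forall>\<xi>. (\<lambda>x. a x \<xi>) \<in> borel_measurable lebesgue"
    and R: "R \<ge> 1" and fin: "finite \<Lambda>" and sph: "\<Lambda> \<subseteq> sphere 0 1"
    and sep: "\<forall>\<mu>\<in>\<Lambda>. \<forall>\<mu>'\<in>\<Lambda>. \<mu> \<noteq> \<mu>' \<longrightarrow> dist \<mu> \<mu>' \<ge> 1 / R"
    and M0: "M \<ge> 0" and nu: "\<nu> \<ge> 0"
  shows "(LINT x : ball 0 R | lebesgue. (cmod (\<Sum>\<mu>\<in>\<Lambda>. b \<mu> * a x \<mu> * ex (\<mu> \<bullet> x)))\<^sup>2)
     \<le> (M * (3 * R) powr (\<nu> / 2))\<^sup>2 * 9 ^ CARD('n) * CA CARD('n) * R ^ CARD('n) * (\<Sum>\<mu>\<in>\<Lambda>. (cmod (b \<mu>))\<^sup>2)"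
proof -
  define d where "d = CARD('n)"
  have R0: "R > 0" using R by simp
  define T where "T j = (\<lambda>\<mu>. \<mu>$j) ` \<Lambda>" for j
  have finT: "\<And>j. finite (T j)" using fin by (simp add: T_def)
  have bndT: "\<And>j. \<forall>u\<in>T j. \<bar>u\<bar> \<le> 1"
  proof
    fix j u assume "u \<in> T j"
    then obtain \<mu> where \<mu>: "\<mu> \<in> \<Lambda>" "u = \<mu>$j" by (auto simp: T_def)
    have "\<bar>\<mu>$j\<bar> \<le> norm \<mu>" by (rule component_le_norm_cart)
    also have "\<dots> = 1" using sph \<mu> by auto
    finally show "\<bar>u\<bar> \<le> 1" using \<mu> by simp
  qed
  obtain L where L: "set L = (UNIV :: 'n set)" "distinct L"
    using finite_distinct_list[of "UNIV :: 'n set"] by auto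
  have lenL: "length L = d" using distinct_card[OF L(2)] L(1) by (simp add: d_def)
  define G where "G = {t::real^'n. \<forall>i. t$i \<in> T i}"
  have finG: "finite G" unfolding G_def by (rule finite_vecset[OF finT])
  define W where "W t = (\<Prod>i\<in>UNIV. wt T i (t$i))" for t :: "real^'n"
  have W0: "0 \<le> W t" for t unfolding W_def by (intro prod_nonneg) (auto intro: wt_nonneg finT)
  have sumW: "(\<Sum>t\<in>G. W t) \<le> 3 ^ d"
    unfolding G_def W_def d_def by (rule grid_wt_sum[OF finT bndT])
  define Bc where "Bc = M * (3 * R) powr (\<nu> / 2)"
  have Bc0: "0 \<le> Bc" using M0 by (simp add: Bc_def)
  define c where "c t \<mu> = (if \<forall>i. t$i \<le> \<mu>$i then b \<mu> else 0)" for t \<mu> :: "real^'n"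
  define Gt where "Gt t x = (\<Sum>\<mu>\<in>\<Lambda>. c t \<mu> * ex (\<mu> \<bullet> x))" for t x :: "real^'n"
  define F where "F x = (\<Sum>\<mu>\<in>\<Lambda>. b \<mu> * a x \<mu> * ex (\<mu> \<bullet> x))" for x :: "real^'n"
  define D where "D x t = DL T L (a x) t" for x t :: "real^'n"
  have dec: "a x \<mu> = (\<Sum>t\<in>G. if \<forall>i. t$i \<le> \<mu>$i then D x t else 0)" if \<mu>: "\<mu> \<in> \<Lambda>" for x \<mu>
  proof -
    have "a x \<mu> = NS T L (DL T L (a x)) \<mu>"
      proof -
      have "\<forall>i\<in>set L. \<mu>$i \<in> T i" using \<mu> by (auto simp: T_def)
      then show ?thesis using tele[of T L \<mu> "a x"] finT L(2) by simp
    qed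
    also have "\<dots> = (\<Sum>t\<in>Box T L \<mu>. DL T L (a x) t)" using NS_Box[of T L "DL T L (a x)" \<mu>] finT L(2) by simp
    also have "Box T L \<mu> = {t \<in> G. \<forall>i. t$i \<le> \<mu>$i}" by (auto simp: Box_def G_def L(1))
    also have "(\<Sum>t\<in>{t \<in> G. \<forall>i. t$i \<le> \<mu>$i}. DL T L (a x) t) = (\<Sum>t\<in>G. if \<forall>i. t$i \<le> \<mu>$i then D x t else 0)"
      using finG unfolding D_def by (simp add: sum.inter_filter)
    finally show ?thesis .
  qed
  have Fdec: "F x = (\<Sum>t\<in>G. D x t * Gt t x)" for x
  proof -
    have "F x = (\<Sum>\<mu>\<in>\<Lambda>. \<Sum>t\<in>G. b \<mu> * (if \<forall>i. t$i \<le> \<mu>$i then D x t else 0) * ex (\<mu> \<bullet> x))"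
      unfolding F_def by (intro sum.cong refl) (simp add: dec sum_distrib_left sum_distrib_right)
    also have "\<dots> = (\<Sum>t\<in>G. \<Sum>\<mu>\<in>\<Lambda>. D x t * (c t \<mu> * ex (\<mu> \<bullet> x)))"
      by (subst sum.swap) (intro sum.cong refl, simp add: c_def)
    also have "\<dots> = (\<Sum>t\<in>G. D x t * Gt t x)" by (simp add: Gt_def sum_distrib_left)
    finally show ?thesis .
  qed
  have Dbnd: "cmod (D x t) \<le> W t * (M * jbr x powr (\<nu> / 2))" for x t
  proof -
    have sm: "\<And>is \<xi>. pderivs is (a x) differentiable (at \<xi>)"
      using smooth unfolding smooth_fun_def by auto
    have bd: "\<And>is \<xi>. length is \<le> d \<Longrightarrow> cmod (pderivs is (a x) \<xi>) \<le> M * jbr x powr (\<nu> / 2)"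
      using bnd by (auto simp: d_def)
    have "cmod (DL T L (a x) t) \<le> (\<Prod>i\<in>set L. wt T i (t$i)) * (M * jbr x powr (\<nu> / 2))"
      using DL_bound[where L=L and n=d and g="a x" and B="M * jbr x powr (\<nu> / 2)" and T=T and t=t] L(2) lenL sm bd finT by simp
    then show ?thesis by (simp add: D_def W_def L(1))
  qed
  define H where "H x = Bc\<^sup>2 * 3 ^ d * (\<Sum>t\<in>G. W t * (cmod (Gt t x))\<^sup>2)" for x
  have pw: "(cmod (F x))\<^sup>2 \<le> H x" if x: "x \<in> ball 0 R" for x
  proof -
    have jb: "M * jbr x powr (\<nu> / 2) \<le> Bc"
    proof -
      have "jbr x \<le> 3 * R" using x R by (simp add: jbr_def)
      moreover have "0 < jbr x" by (simp add: jbr_def add_pos_nonneg)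
      ultimately have "jbr x powr (\<nu> / 2) \<le> (3 * R) powr (\<nu> / 2)" using nu by (intro powr_mono2) auto
      then show ?thesis unfolding Bc_def using M0 by (rule mult_left_mono)
    qed
    have "cmod (F x) \<le> (\<Sum>t\<in>G. cmod (D x t) * cmod (Gt t x))"
      unfolding Fdec by (rule order_trans[OF norm_sum]) (simp add: norm_mult)
    also have "\<dots> \<le> (\<Sum>t\<in>G. W t * Bc * cmod (Gt t x))"
    proof (intro sum_mono mult_right_mono)
      fix t
      have "cmod (D x t) \<le> W t * (M * jbr x powr (\<nu> / 2))" by (rule Dbnd)
      also have "\<dots> \<le> W t * Bc" using jb W0 by (rule mult_left_mono)
      finally show "cmod (D x t) \<le> W t * Bc" .
    qed simp
    also have "\<dots> = Bc * (\<Sum>t\<in>G. W t * cmod (Gt t x))" by (simp add: sum_distrib_left algebra_simps)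
    finally have f1: "cmod (F x) \<le> Bc * (\<Sum>t\<in>G. W t * cmod (Gt t x))" .
    have "(cmod (F x))\<^sup>2 \<le> (Bc * (\<Sum>t\<in>G. W t * cmod (Gt t x)))\<^sup>2"
      using f1 by (intro power_mono) auto
    also have "\<dots> = Bc\<^sup>2 * (\<Sum>t\<in>G. W t * cmod (Gt t x))\<^sup>2" by (simp add: power_mult_distrib)
    also have "\<dots> \<le> Bc\<^sup>2 * ((\<Sum>t\<in>G. W t) * (\<Sum>t\<in>G. W t * (cmod (Gt t x))\<^sup>2))"
      using weighted_CS[of G W "\<lambda>t. cmod (Gt t x)"] W0 by (intro mult_left_mono) auto
    also have "\<dots> \<le> Bc\<^sup>2 * (3 ^ d * (\<Sum>t\<in>G. W t * (cmod (Gt t x))\<^sup>2))"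
      using sumW W0 by (intro mult_left_mono mult_right_mono sum_nonneg) auto
    finally show ?thesis by (simp add: H_def mult.assoc)
  qed
  have contGt: "continuous_on UNIV (Gt t)" for t unfolding Gt_def by (intro continuous_intros)
  have iGt: "integrable lebesgue (\<lambda>x. indicator (ball 0 R) x * (cmod (Gt t x))\<^sup>2)" for t
    using contGt[of t] by (intro integrable_ball_cont continuous_intros) auto
  have iH: "integrable lebesgue (\<lambda>x. indicator (ball 0 R) x * H x)"
    unfolding H_def using contGt by (intro integrable_ball_cont continuous_intros) auto
  have baseGt: "(\<integral>x. indicator (ball 0 R) x * (cmod (Gt t x))\<^sup>2 \<partial>lebesgue) \<le> CA d * R ^ d * (\<Sum>\<mu>\<in>\<Lambda>. (cmod (b \<mu>))\<^sup>2)" for t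
  proof -
    have "(\<integral>x. indicator (ball 0 R) x * (cmod (Gt t x))\<^sup>2 \<partial>lebesgue) = (LINT x : ball 0 R | lebesgue. (cmod (Gt t x))\<^sup>2)"
      by (simp add: set_lebesgue_integral_def)
    also have "\<dots> \<le> CA d * R ^ d * (\<Sum>\<mu>\<in>\<Lambda>. (cmod (c t \<mu>))\<^sup>2)"
      unfolding Gt_def d_def by (rule base_ineq[OF fin R0 sep])
    also have "\<dots> \<le> CA d * R ^ d * (\<Sum>\<mu>\<in>\<Lambda>. (cmod (b \<mu>))\<^sup>2)"
      using R0 by (intro mult_left_mono sum_mono) (auto simp: c_def CA_def)
    finally show ?thesis .
  qed
  have "(LINT x : ball 0 R | lebesgue. (cmod (F x))\<^sup>2) = (\<integral>x. indicator (ball 0 R) x * (cmod (F x))\<^sup>2 \<partial>lebesgue)"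
    by (simp add: set_lebesgue_integral_def)
  also have "\<dots> \<le> (\<integral>x. indicator (ball 0 R) x * H x \<partial>lebesgue)"
  proof (rule integral_mono'[OF iH])
    fix x :: "real^'n"
    have H0: "0 \<le> H x" unfolding H_def using W0 by (intro mult_nonneg_nonneg sum_nonneg) auto
    then show "0 \<le> indicator (ball 0 R) x * H x" by simp
    show "indicator (ball 0 R) x * (cmod (F x))\<^sup>2 \<le> indicator (ball 0 R) x * H x"
      using pw by (cases "x \<in> ball 0 R") auto
  qed
  also have "(\<integral>x. indicator (ball 0 R) x * H x \<partial>lebesgue)
      = Bc\<^sup>2 * 3 ^ d * (\<Sum>t\<in>G. W t * (\<integral>x. indicator (ball 0 R) x * (cmod (Gt t x))\<^sup>2 \<partial>lebesgue))"
  proof -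
    have "(\<lambda>x. indicator (ball 0 R) x * H x) = (\<lambda>x. Bc\<^sup>2 * 3 ^ d * (\<Sum>t\<in>G. W t * (indicator (ball 0 R) x * (cmod (Gt t x))\<^sup>2)))"
      by (simp add: H_def fun_eq_iff sum_distrib_left algebra_simps)
    moreover have "(\<integral>x. (\<Sum>t\<in>G. W t * (indicator (ball 0 R) x * (cmod (Gt t x))\<^sup>2)) \<partial>lebesgue)
        = (\<Sum>t\<in>G. W t * (\<integral>x. indicator (ball 0 R) x * (cmod (Gt t x))\<^sup>2 \<partial>lebesgue))"
      using iGt by (subst Bochner_Integration.integral_sum) auto
    ultimately show ?thesis by simp
  qed
  also have "\<dots> \<le> Bc\<^sup>2 * 3 ^ d * (\<Sum>t\<in>G. W t * (CA d * R ^ d * (\<Sum>\<mu>\<in>\<Lambda>. (cmod (b \<mu>))\<^sup>2)))"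
    using baseGt W0 by (intro mult_left_mono sum_mono) auto
  also have "\<dots> = Bc\<^sup>2 * 3 ^ d * ((\<Sum>t\<in>G. W t) * (CA d * R ^ d * (\<Sum>\<mu>\<in>\<Lambda>. (cmod (b \<mu>))\<^sup>2)))"
    by (simp add: sum_distrib_right)
  also have "\<dots> \<le> Bc\<^sup>2 * 3 ^ d * (3 ^ d * (CA d * R ^ d * (\<Sum>\<mu>\<in>\<Lambda>. (cmod (b \<mu>))\<^sup>2)))"
    using sumW R0 by (intro mult_left_mono mult_right_mono mult_nonneg_nonneg sum_nonneg) (auto simp: CA_def)
  also have "\<dots> = Bc\<^sup>2 * 9 ^ d * CA d * R ^ d * (\<Sum>\<mu>\<in>\<Lambda>. (cmod (b \<mu>))\<^sup>2)"
  proof -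
    have "(9::real) ^ d = 3 ^ d * 3 ^ d" by (simp add: power_mult_distrib[symmetric])
    then show ?thesis by (simp add: mult_ac)
  qed
  finally show ?thesis by (simp add: F_def Bc_def d_def)
qed

lemma sq_powr_half: "(x powr (a / 2))\<^sup>2 = x powr (a::real)" for x :: real
proof -
  have "(x powr (a / 2))\<^sup>2 = x powr (a / 2) * x powr (a / 2)" by (simp add: power2_eq_square)
  also have "\<dots> = x powr (a / 2 + a / 2)" by (rule powr_add[symmetric])
  finally show ?thesis by simp
qed

theorem mainTheorem6:
  fixes \<nu> :: real
  assumes dim: "CARD('n::finite) \<ge> 2"
    and nu: "\<nu> > 0"
  shows "\<exists>N::nat. \<forall>M::real. \<exists>K::real. \<forall>(a :: real^'n \<Rightarrow> real^'n \<Rightarrow> complex) R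
            (\<Lambda> :: (real^'n) set) (b :: real^'n \<Rightarrow> complex).
     (\<forall>x. smooth_fun (\<lambda>\<xi>. a x \<xi>))
   \<longrightarrow> (\<forall>k::nat. \<exists>C::real. \<forall>x \<xi> (is :: 'n list). length is \<le> k \<longrightarrow>
            cmod (pderivs is (\<lambda>\<eta>. a x \<eta>) \<xi>) \<le> C * jbr x powr (\<nu> / 2))
   \<longrightarrow> (\<forall>x \<xi> (is :: 'n list). length is \<le> N \<longrightarrow>
            cmod (pderivs is (\<lambda>\<eta>. a x \<eta>) \<xi>) \<le> M * jbr x powr (\<nu> / 2))
   \<longrightarrow> (\<forall>\<xi>. (\<lambda>x. a x \<xi>) \<in> borel_measurable lebesgue)
   \<longrightarrow> R \<ge> 1
   \<longrightarrow> finite \<Lambda>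
   \<longrightarrow> \<Lambda> \<subseteq> sphere 0 1
   \<longrightarrow> (\<forall>\<mu>\<in>\<Lambda>. \<forall>\<mu>'\<in>\<Lambda>. \<mu> \<noteq> \<mu>' \<longrightarrow> dist \<mu> \<mu>' \<ge> 1 / R)
   \<longrightarrow> sqrt (LINT x : ball 0 R | lebesgue.
          (cmod (\<Sum>\<mu>\<in>\<Lambda>. b \<mu> * a x \<mu> * exp (2 * of_real pi * \<i> * of_real (\<mu> \<bullet> x))))\<^sup>2)
       \<le> K * R powr ((real CARD('n) + \<nu>) / 2) * sqrt (\<Sum>\<mu>\<in>\<Lambda>. (cmod (b \<mu>))\<^sup>2)"
proof (intro exI[of _ "CARD('n)"] allI)
  fix M :: real
  define K where "K = \<bar>M\<bar> * 3 powr (\<nu> / 2) * 3 ^ CARD('n) * sqrt (CA CARD('n))"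
  show "\<exists>K::real. \<forall>(a :: real^'n \<Rightarrow> real^'n \<Rightarrow> complex) R
            (\<Lambda> :: (real^'n) set) (b :: real^'n \<Rightarrow> complex).
     (\<forall>x. smooth_fun (\<lambda>\<xi>. a x \<xi>))
   \<longrightarrow> (\<forall>k::nat. \<exists>C::real. \<forall>x \<xi> (is :: 'n list). length is \<le> k \<longrightarrow>
            cmod (pderivs is (\<lambda>\<eta>. a x \<eta>) \<xi>) \<le> C * jbr x powr (\<nu> / 2))
   \<longrightarrow> (\<forall>x \<xi> (is :: 'n list). length is \<le> CARD('n) \<longrightarrow>
            cmod (pderivs is (\<lambda>\<eta>. a x \<eta>) \<xi>) \<le> M * jbr x powr (\<nu> / 2))
   \<longrightarrow> (\<forall>\<xi>. (\<lambda>x. a x \<xi>) \<in> borel_measurable lebesgue)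
   \<longrightarrow> R \<ge> 1
   \<longrightarrow> finite \<Lambda>
   \<longrightarrow> \<Lambda> \<subseteq> sphere 0 1
   \<longrightarrow> (\<forall>\<mu>\<in>\<Lambda>. \<forall>\<mu>'\<in>\<Lambda>. \<mu> \<noteq> \<mu>' \<longrightarrow> dist \<mu> \<mu>' \<ge> 1 / R)
   \<longrightarrow> sqrt (LINT x : ball 0 R | lebesgue.
          (cmod (\<Sum>\<mu>\<in>\<Lambda>. b \<mu> * a x \<mu> * exp (2 * of_real pi * \<i> * of_real (\<mu> \<bullet> x))))\<^sup>2)
       \<le> K * R powr ((real CARD('n) + \<nu>) / 2) * sqrt (\<Sum>\<mu>\<in>\<Lambda>. (cmod (b \<mu>))\<^sup>2)"
  proof (intro exI[of _ K] allI impI)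
    fix a :: "real^'n \<Rightarrow> real^'n \<Rightarrow> complex" and R :: real and \<Lambda> :: "(real^'n) set" and b :: "real^'n \<Rightarrow> complex"
    assume smooth: "\<forall>x. smooth_fun (\<lambda>\<xi>. a x \<xi>)"
      and "\<forall>k::nat. \<exists>C::real. \<forall>x \<xi> (is :: 'n list). length is \<le> k \<longrightarrow>
            cmod (pderivs is (\<lambda>\<eta>. a x \<eta>) \<xi>) \<le> C * jbr x powr (\<nu> / 2)"
      and bnd: "\<forall>x \<xi> (is :: 'n list). length is \<le> CARD('n) \<longrightarrow>
            cmod (pderivs is (\<lambda>\<eta>. a x \<eta>) \<xi>) \<le> M * jbr x powr (\<nu> / 2)"
      and meas: "\<forall>\<xi>. (\<lambda>x. a x \<xi>) \<in> borel_measurable lebesgue"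
      and R: "R \<ge> 1" and fin: "finite \<Lambda>" and sph: "\<Lambda> \<subseteq> sphere 0 1"
      and sep: "\<forall>\<mu>\<in>\<Lambda>. \<forall>\<mu>'\<in>\<Lambda>. \<mu> \<noteq> \<mu>' \<longrightarrow> dist \<mu> \<mu>' \<ge> 1 / R"
    have R0: "R > 0" using R by simp
    have M0: "M \<ge> 0"
    proof -
      have "cmod (pderivs [] (\<lambda>\<eta>. a 0 \<eta>) 0) \<le> M * jbr (0::real^'n) powr (\<nu> / 2)"
        using bnd by (metis le0 list.size(3))
      then have "0 \<le> M * 2 powr (\<nu> / 2)" by (simp add: jbr_def) (meson norm_ge_zero order_trans)
      moreover have "0 < (2::real) powr (\<nu> / 2)" by simp
      ultimately show ?thesis by (simp add: zero_le_mult_iff)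
    qed
    let ?I = "LINT x : ball 0 R | lebesgue.
          (cmod (\<Sum>\<mu>\<in>\<Lambda>. b \<mu> * a x \<mu> * exp (2 * of_real pi * \<i> * of_real (\<mu> \<bullet> x))))\<^sup>2"
    let ?S = "\<Sum>\<mu>\<in>\<Lambda>. (cmod (b \<mu>))\<^sup>2"
    define P where "P = R powr ((real CARD('n) + \<nu>) / 2)"
    have P0: "0 \<le> P" by (simp add: P_def)
    have CA0: "0 \<le> CA CARD('n)" by (simp add: CA_def)
    have K0: "0 \<le> K" using CA0 by (simp add: K_def)
    have mb: "?I \<le> (M * (3 * R) powr (\<nu> / 2))\<^sup>2 * 9 ^ CARD('n) * CA CARD('n) * R ^ CARD('n) * ?S"
      using main_bound[OF smooth bnd meas R fin sph sep M0] nu unfolding ex_def by simp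
    have "(M * (3 * R) powr (\<nu> / 2))\<^sup>2 * 9 ^ CARD('n) * CA CARD('n) * R ^ CARD('n) = (K * P)\<^sup>2"
    proof -
      have e1: "((3 * R) powr (\<nu> / 2))\<^sup>2 = 3 powr \<nu> * R powr \<nu>"
        using R0 by (simp add: sq_powr_half powr_mult power_mult_distrib)
      have e2: "(3 powr (\<nu> / 2))\<^sup>2 = 3 powr \<nu>"
        by (rule sq_powr_half)
      have e3: "P\<^sup>2 = R ^ CARD('n) * R powr \<nu>"
        using R0 by (simp add: P_def sq_powr_half powr_add powr_realpow)
      have e4: "(sqrt (CA CARD('n)))\<^sup>2 = CA CARD('n)" using CA0 by simp
      have e5: "((3::real) ^ CARD('n))\<^sup>2 = 9 ^ CARD('n)" by (simp add: power_mult_distrib[symmetric] power2_eq_square power_mult[symmetric] mult.commute)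
      show ?thesis unfolding K_def power_mult_distrib e1 e2 e3 e4 e5
        by (simp add: power2_abs mult_ac)
    qed
    then have "?I \<le> (K * P)\<^sup>2 * ?S" using mb by simp
    then have "sqrt ?I \<le> sqrt ((K * P)\<^sup>2 * ?S)" by (rule real_sqrt_le_mono)
    also have "\<dots> = K * P * sqrt ?S" using K0 P0 by (simp add: real_sqrt_mult)
    finally show "sqrt ?I \<le> K * R powr ((real CARD('n) + \<nu>) / 2) * sqrt ?S" by (simp add: P_def)
  qed
qed

end
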